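(* For every $\varepsilon\in(0,1)$ there exists $C(\varepsilon)>0$ such that the following holds. Assume $N \ge C(\varepsilon)n$ and let $x_1,\ldots,x_N$ be independent standard Gaussian random vectors in $\mathbb{R}^n$. Then $$\mathrm{conv}(x_1,\ldots,x_N) \supset \sqrt{2\log\Big(\frac{N}{n}\Big)(1-\varepsilon)}\cdot B(n)$$ with probability at least $1-e^{-n}$, where $B(n)$ is the unit Euclidean ball in $\mathbb{R}^n$ centered at the origin. *)

theory Defs
  imports "HOL-Probability.Probability"
begin

text \<open>Vectors of R^n are represented as functions nat => real, of which only the
coordinates j < n are relevant.  A family of N points x_0, ..., x_(N-1) in R^n is a
function x :: nat => nat => real, point i having coordinates x i j for j < n.\<close>

definition conv_pts :: "nat \<Rightarrow> nat \<Rightarrow> (nat \<Rightarrow> nat \<Rightarrow> real) \<Rightarrow> (nat \<Rightarrow> real) set" where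
  "conv_pts n N x = {y. \<exists>l :: nat \<Rightarrow> real. (\<forall>i<N. 0 \<le> l i) \<and> (\<Sum>i<N. l i) = 1 \<and>
                        (\<forall>j<n. y j = (\<Sum>i<N. l i * x i j))}"

definition ball_n :: "nat \<Rightarrow> real \<Rightarrow> (nat \<Rightarrow> real) set" where
  "ball_n n r = {y. sqrt (\<Sum>j<n. (y j)\<^sup>2) \<le> r}"

definition subset_n :: "nat \<Rightarrow> (nat \<Rightarrow> real) set \<Rightarrow> (nat \<Rightarrow> real) set \<Rightarrow> bool" where
  "subset_n n A B = (\<forall>y\<in>A. \<exists>z\<in>B. \<forall>j<n. y j = z j)"

definition std_gauss :: "nat \<Rightarrow> (nat \<Rightarrow> real) measure" where
  "std_gauss n = PiM {..<n} (\<lambda>_. std_normal_distribution)"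

definition gauss_sample :: "nat \<Rightarrow> nat \<Rightarrow> (nat \<Rightarrow> nat \<Rightarrow> real) measure" where
  "gauss_sample n N = PiM {..<N} (\<lambda>_. std_gauss n)"

end

theory Submission
  imports Defs "HOL-Real_Asymp.Real_Asymp"
begin

definition ip :: "nat \<Rightarrow> (nat \<Rightarrow> real) \<Rightarrow> (nat \<Rightarrow> real) \<Rightarrow> real" where
  "ip n a b = (\<Sum>j<n. a j * b j)"

definition nrm :: "nat \<Rightarrow> (nat \<Rightarrow> real) \<Rightarrow> real" where
  "nrm n a = sqrt (\<Sum>j<n. (a j)\<^sup>2)"

lemma nrm_L2: "nrm n a = L2_set a {..<n}"
  by (simp add: nrm_def L2_set_def)

lemma nrm_nonneg[simp]: "0 \<le> nrm n a"
  by (simp add: nrm_L2)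

lemma nrm_sq: "(nrm n a)\<^sup>2 = (\<Sum>j<n. (a j)\<^sup>2)"
  unfolding nrm_def by (simp add: sum_nonneg)

lemma ip_self: "ip n a a = (nrm n a)\<^sup>2"
  unfolding nrm_sq ip_def by (simp add: power2_eq_square)

lemma ip_comm: "ip n a b = ip n b a"
  by (simp add: ip_def mult.commute)

lemma cs_abs: "\<bar>ip n a b\<bar> \<le> nrm n a * nrm n b"
proof -
  have "\<bar>ip n a b\<bar> \<le> (\<Sum>j<n. \<bar>a j\<bar> * \<bar>b j\<bar>)"
    unfolding ip_def by (metis (no_types, lifting) abs_mult sum.cong sum_abs)
  also have "\<dots> \<le> nrm n a * nrm n b" unfolding nrm_L2 by (rule L2_set_mult_ineq)
  finally show ?thesis .
qed

lemma cs: "ip n a b \<le> nrm n a * nrm n b"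
  using cs_abs[of n a b] by linarith

lemma nrm_triangle: "nrm n (\<lambda>j. a j + b j) \<le> nrm n a + nrm n b"
  unfolding nrm_L2 by (rule L2_set_triangle_ineq)

lemma nrm_cong: "(\<And>j. j < n \<Longrightarrow> a j = b j) \<Longrightarrow> nrm n a = nrm n b"
  unfolding nrm_def by (auto intro!: sum.cong)

lemma ip_cong: "(\<And>j. j < n \<Longrightarrow> a j = a' j) \<Longrightarrow> (\<And>j. j < n \<Longrightarrow> b j = b' j) \<Longrightarrow> ip n a b = ip n a' b'"
  unfolding ip_def by (auto intro!: sum.cong)

lemma nrm_scale: "nrm n (\<lambda>j. c * a j) = \<bar>c\<bar> * nrm n a"
  unfolding nrm_def by (simp add: power_mult_distrib sum_distrib_left[symmetric] real_sqrt_mult)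

lemma ip_scale_right: "ip n a (\<lambda>j. c * b j) = c * ip n a b"
  unfolding ip_def by (simp add: sum_distrib_left algebra_simps)

lemma ip_add_right: "ip n a (\<lambda>j. b j + c j) = ip n a b + ip n a c"
  unfolding ip_def by (simp add: sum.distrib algebra_simps)

lemma ip_diff_right: "ip n a (\<lambda>j. b j - c j) = ip n a b - ip n a c"
  unfolding ip_def by (simp add: sum_subtractf algebra_simps)

lemma ip_sum_left: "ip n (\<lambda>j. \<Sum>i\<in>S. f i j) b = (\<Sum>i\<in>S. ip n (f i) b)"
  unfolding ip_def by (simp add: sum_distrib_right sum.swap[of _ S])

lemma nrm_zero_iff: "nrm n a = 0 \<longleftrightarrow> (\<forall>j<n. a j = 0)"
  unfolding nrm_L2 by (subst L2_set_eq_0_iff) auto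

lemma simplex_compact:
  fixes N :: nat
  shows "compact (PiE UNIV (\<lambda>i. if i < N then {0..1::real} else {0}) \<inter> {l. (\<Sum>i<N. l i) = 1})"
proof -
  have "compactin (product_topology (\<lambda>i. euclidean) UNIV) (PiE UNIV (\<lambda>i. if i < N then {0..1::real} else {0}))"
    by (subst compactin_PiE) auto
  then have c: "compact (PiE UNIV (\<lambda>i. if i < N then {0..1::real} else {0}))"
    by (simp add: euclidean_product_topology)
  have "closed {l::nat\<Rightarrow>real. (\<Sum>i<N. l i) = 1}"
    by (intro closed_Collect_eq continuous_intros continuous_on_product_coordinates)
  then show ?thesis by (rule compact_Int_closed[OF c])
qed

lemma simplex_min:
  fixes F :: "(nat \<Rightarrow> real) \<Rightarrow> real"
  assumes "N \<ge> 1" "continuous_on UNIV F"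
  shows "\<exists>l. (\<forall>i. l i \<in> (if i<N then {0..1} else {0})) \<and> (\<Sum>i<N. l i) = 1 \<and>
     (\<forall>l'. (\<forall>i. l' i \<in> (if i<N then {0..1} else {0})) \<and> (\<Sum>i<N. l' i) = 1 \<longrightarrow> F l \<le> F l')"
proof -
  let ?D = "PiE UNIV (\<lambda>i. if i < N then {0..1::real} else {0}) \<inter> {l. (\<Sum>i<N. l i) = 1}"
  have "(\<lambda>i. if i = 0 then 1 else 0) \<in> ?D" using assms(1) 
    by (auto simp: PiE_def extensional_def sum.delta)
  then have ne: "?D \<noteq> {}" by blast
  from continuous_attains_inf[OF simplex_compact ne continuous_on_subset[OF assms(2)]]
  obtain l where "l \<in> ?D" "\<forall>y\<in>?D. F l \<le> F y" by auto
  then show ?thesis by (intro exI[of _ l]) (auto simp: PiE_def Pi_def)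
qed

lemma hcond_imp_subset:
  assumes N1: "N \<ge> 1" and r0: "r \<ge> 0"
    and H: "\<forall>\<theta>. \<exists>i<N. ip n (x i) \<theta> \<ge> r * nrm n \<theta>"
  shows "subset_n n (ball_n n r) (conv_pts n N x)"
  unfolding subset_n_def
proof (intro ballI)
  fix y assume "y \<in> ball_n n r"
  then have ny: "nrm n y \<le> r" by (simp add: ball_n_def nrm_def)
  show "\<exists>z\<in>conv_pts n N x. \<forall>j<n. y j = z j"
  proof (rule ccontr)
    assume nz: "\<not> (\<exists>z\<in>conv_pts n N x. \<forall>j<n. y j = z j)"
    define F where "F l = (\<Sum>j<n. (y j - (\<Sum>i<N. l i * x i j))\<^sup>2)" for l :: "nat \<Rightarrow> real"
    have cont: "continuous_on UNIV F"
      unfolding F_def by (intro continuous_intros continuous_on_product_coordinates)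
    obtain l where lD: "\<forall>i. l i \<in> (if i<N then {0..1} else {0})" "(\<Sum>i<N. l i) = 1"
      and lmin: "\<And>l'. (\<forall>i. l' i \<in> (if i<N then {0..1} else {0})) \<and> (\<Sum>i<N. l' i) = 1 \<Longrightarrow> F l \<le> F l'"
      using simplex_min[OF N1 cont] by blast
    define p where "p j = (\<Sum>i<N. l i * x i j)" for j
    define \<theta> where "\<theta> j = y j - p j" for j
    have pconv: "p \<in> conv_pts n N x"
      unfolding conv_pts_def p_def using lD
      by (auto intro!: exI[of _ l] split: if_splits)
    have th0: "nrm n \<theta> > 0"
    proof (rule ccontr)
      assume "\<not> nrm n \<theta> > 0"
      then have "nrm n \<theta> = 0" using nrm_nonneg[of n \<theta>] by linarith
      then have "\<forall>j<n. y j = p j" by (auto simp: nrm_zero_iff \<theta>_def)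
      then show False using nz pconv by blast
    qed
    have Fl: "F l = (nrm n \<theta>)\<^sup>2" by (simp add: F_def nrm_sq \<theta>_def p_def)
    have opt: "ip n (x i) \<theta> \<le> ip n p \<theta>" if iN: "i < N" for i
    proof (rule ccontr)
      assume "\<not> ip n (x i) \<theta> \<le> ip n p \<theta>"
      define w where "w = (\<lambda>j. x i j - p j)"
      define c where "c = ip n w \<theta>"
      have c0: "c > 0" using \<open>\<not> ip n (x i) \<theta> \<le> ip n p \<theta>\<close>
        by (simp add: c_def w_def ip_comm[of n _ \<theta>] ip_diff_right)
      define D where "D = (nrm n w)\<^sup>2"
      have D0: "D \<ge> 0" by (simp add: D_def)
      define s where "s = min 1 (c / (D + 1))"
      have s0: "s > 0" using c0 D0 by (simp add: s_def)
      have s1: "s \<le> 1" by (simp add: s_def)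
      have sc: "s \<le> c / (D + 1)" by (simp add: s_def)
      define l' where "l' k = (1 - s) * l k + s * (if k = i then 1 else 0)" for k
      have l'D: "(\<forall>k. l' k \<in> (if k<N then {0..1} else {0})) \<and> (\<Sum>k<N. l' k) = 1"
      proof (intro conjI allI)
        fix k
        show "l' k \<in> (if k<N then {0..1} else {0})"
        proof (cases "k < N")
          case True
          then have "0 \<le> l k" "l k \<le> 1" using lD(1)[rule_format, of k] by auto
          then have "0 \<le> (1 - s) * l k" "(1 - s) * l k \<le> 1 - s" using s1
            by (auto intro: mult_left_le)
          then show ?thesis using True s0 by (auto simp: l'_def)
        next
          case False
          then show ?thesis using lD(1)[rule_format, of k] iN by (auto simp: l'_def)
        qed
      next
        show "(\<Sum>k<N. l' k) = 1"
          using iN lD(2) by (simp add: l'_def sum.distrib sum_distrib_left[symmetric])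
      qed
      have eq: "(\<Sum>k<N. l' k * x k j) = p j + s * w j" for j
      proof -
        have "(\<Sum>k<N. l' k * x k j) = (\<Sum>k<N. (1 - s) * (l k * x k j) + s * (if k = i then x k j else 0))"
          by (intro sum.cong) (auto simp: l'_def algebra_simps)
        also have "\<dots> = (1 - s) * p j + s * x i j"
          using iN by (simp add: sum.distrib sum_distrib_left[symmetric] p_def)
        finally show ?thesis by (simp add: w_def algebra_simps)
      qed
      have "F l' = (\<Sum>j<n. (\<theta> j - s * w j)\<^sup>2)"
        unfolding F_def by (intro sum.cong refl) (simp add: eq \<theta>_def algebra_simps)
      also have "\<dots> = (\<Sum>j<n. (\<theta> j)\<^sup>2 - 2 * s * (w j * \<theta> j) + s\<^sup>2 * (w j)\<^sup>2)"
        by (intro sum.cong refl) (simp add: power2_eq_square algebra_simps)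
      also have "\<dots> = (\<Sum>j<n. (\<theta> j)\<^sup>2) - 2 * s * (\<Sum>j<n. w j * \<theta> j) + s\<^sup>2 * (\<Sum>j<n. (w j)\<^sup>2)"
        by (simp add: sum.distrib sum_subtractf sum_distrib_left)
      also have "\<dots> = (nrm n \<theta>)\<^sup>2 - 2 * s * c + s\<^sup>2 * D"
        by (simp add: nrm_sq c_def D_def ip_def mult.commute)
      finally have Fl': "F l' = (nrm n \<theta>)\<^sup>2 - 2 * s * c + s\<^sup>2 * D" .
      have "F l \<le> F l'" using lmin l'D by blast
      then have "2 * s * c \<le> s\<^sup>2 * D" using Fl Fl' by linarith
      then have "2 * c \<le> s * D" using s0 by (simp add: power2_eq_square mult.assoc)
      moreover have "s * D \<le> c / (D + 1) * D" using sc D0 by (rule mult_right_mono)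
      moreover have "c / (D + 1) * D \<le> c" using c0 D0 by (simp add: field_simps)
      ultimately show False using c0 by linarith
    qed
    obtain i where iN: "i < N" and hi: "ip n (x i) \<theta> \<ge> r * nrm n \<theta>" using spec[OF H, of \<theta>] by blast
    have "ip n \<theta> \<theta> = ip n \<theta> y - ip n \<theta> p"
      by (simp add: ip_def \<theta>_def right_diff_distrib sum_subtractf)
    then have "ip n \<theta> \<theta> = ip n y \<theta> - ip n p \<theta>" by (simp only: ip_comm[of n \<theta> y] ip_comm[of n \<theta> p])
    then have "ip n p \<theta> = ip n y \<theta> - (nrm n \<theta>)\<^sup>2" by (simp add: ip_self)
    moreover have "ip n y \<theta> \<le> r * nrm n \<theta>"
      using cs[of n y \<theta>] ny mult_right_mono[OF ny nrm_nonneg[of n \<theta>]] by linarith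
    moreover have "(nrm n \<theta>)\<^sup>2 > 0" using th0 by (rule zero_less_power)
    ultimately have "ip n p \<theta> < r * nrm n \<theta>" by linarith
    then show False using opt[OF iN] hi by linarith
  qed
qed

lemma subset_imp_hcond:
  assumes N1: "N \<ge> 1" and r0: "r \<ge> 0"
    and S: "subset_n n (ball_n n r) (conv_pts n N x)"
  shows "\<exists>i<N. ip n (x i) \<theta> \<ge> r * nrm n \<theta>"
proof (cases "nrm n \<theta> = 0")
  case True
  then have "ip n (x 0) \<theta> = 0" by (simp add: nrm_zero_iff ip_def)
  then show ?thesis using N1 True by (intro exI[of _ 0]) auto
next
  case False
  then have np: "nrm n \<theta> > 0" using nrm_nonneg[of n \<theta>] by linarith
  define y where "y = (\<lambda>j. (r / nrm n \<theta>) * \<theta> j)"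
  have "nrm n y = r" using np r0 unfolding y_def nrm_scale by simp
  then have "y \<in> ball_n n r" by (simp add: ball_n_def nrm_def)
  then obtain z where "z \<in> conv_pts n N x" and zy: "\<forall>j<n. y j = z j"
    using S unfolding subset_n_def by blast
  then obtain l where l0: "\<forall>i<N. 0 \<le> l i" and l1: "(\<Sum>i<N. l i) = 1"
    and lz: "\<forall>j<n. z j = (\<Sum>i<N. l i * x i j)"
    unfolding conv_pts_def by blast
  have "ip n y \<theta> = ip n \<theta> y" by (rule ip_comm)
  also have "\<dots> = (r / nrm n \<theta>) * ip n \<theta> \<theta>" unfolding y_def by (rule ip_scale_right)
  also have "\<dots> = r * nrm n \<theta>" using np by (simp add: ip_self power2_eq_square)
  finally have e1: "ip n y \<theta> = r * nrm n \<theta>" .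
  have "ip n y \<theta> = ip n (\<lambda>j. \<Sum>i<N. l i * x i j) \<theta>"
    using zy lz by (intro ip_cong) auto
  also have "\<dots> = (\<Sum>i<N. l i * ip n (x i) \<theta>)"
    by (simp add: ip_sum_left) (simp add: ip_def sum_distrib_left mult.assoc)
  finally have e2: "ip n y \<theta> = (\<Sum>i<N. l i * ip n (x i) \<theta>)" .
  show ?thesis
  proof (rule ccontr)
    assume "\<not> ?thesis"
    then have lt: "\<forall>i<N. ip n (x i) \<theta> < r * nrm n \<theta>" by auto
    have "\<exists>k<N. l k > 0"
    proof (rule ccontr)
      assume "\<not> (\<exists>k<N. l k > 0)"
      then have "\<forall>i<N. l i = 0" using l0 by (meson not_less order.antisym)
      then show False using l1 by simp
    qed
    then obtain k where kN: "k < N" and lk: "l k > 0" by blast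
    have "0 < (\<Sum>i<N. l i * (r * nrm n \<theta> - ip n (x i) \<theta>))"
      using kN lk lt l0 by (intro sum_pos2[of _ k]) auto
    also have "\<dots> = r * nrm n \<theta> - ip n y \<theta>"
    proof -
      have "(\<Sum>i<N. l i * (r * nrm n \<theta> - ip n (x i) \<theta>)) = (\<Sum>i<N. l i) * (r * nrm n \<theta>) - (\<Sum>i<N. l i * ip n (x i) \<theta>)"
        by (simp add: right_diff_distrib sum_subtractf sum_distrib_right)
      then show ?thesis using l1 e2 by simp
    qed
    finally show False using e1 by simp
  qed
qed

definition zvecs :: "nat \<Rightarrow> (nat \<Rightarrow> int) set" where
  "zvecs n = PiE {..<n} (\<lambda>_. UNIV)"

definition zr :: "(nat \<Rightarrow> int) \<Rightarrow> nat \<Rightarrow> real" where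
  "zr k = (\<lambda>j. real_of_int (k j))"

lemma countable_zvecs: "countable (zvecs n)"
  unfolding zvecs_def by (intro countable_PiE) auto

lemma approx_step:
  fixes \<theta> :: "nat \<Rightarrow> real" and m :: nat and x :: "nat \<Rightarrow> nat \<Rightarrow> real" and N :: nat
  assumes m0: "m > 0" and r0: "r \<ge> 0"
    and H: "\<forall>k\<in>zvecs n. \<exists>i<N. ip n (x i) (zr k) \<ge> r * nrm n (zr k)"
  shows "\<exists>i<N. ip n (x i) \<theta> \<ge> r * nrm n \<theta> - ((\<Sum>i<N. \<Sum>j<n. \<bar>x i j\<bar>) + r * n) / m"
proof -
  define k where "k = restrict (\<lambda>j. \<lfloor>real m * \<theta> j\<rfloor>) {..<n}"
  have kz: "k \<in> zvecs n" by (simp add: k_def zvecs_def)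
  obtain i where iN: "i < N" and hi: "ip n (x i) (zr k) \<ge> r * nrm n (zr k)"
    using H kz by blast
  define u where "u = (\<lambda>j. (1 / real m) * zr k j)"
  have hu: "ip n (x i) u \<ge> r * nrm n u"
  proof -
    have "ip n (x i) u = (1 / real m) * ip n (x i) (zr k)" unfolding u_def by (rule ip_scale_right)
    moreover have "nrm n u = (1 / real m) * nrm n (zr k)" unfolding u_def nrm_scale by simp
    ultimately have "real m * (r * nrm n u) \<le> real m * ip n (x i) u" using hi m0
      by (simp add: field_simps)
    then show ?thesis using m0 by (simp add: mult_le_cancel_left_pos)
  qed
  have err: "0 \<le> \<theta> j - u j \<and> \<theta> j - u j \<le> 1 / real m" if "j < n" for j
  proof -
    have uj: "real m * u j = real_of_int \<lfloor>real m * \<theta> j\<rfloor>"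
      using that m0 by (simp add: u_def zr_def k_def)
    have a: "real m * u j \<le> real m * \<theta> j" unfolding uj by (rule of_int_floor_le)
    have b: "real m * \<theta> j < real m * u j + 1" unfolding uj by (rule real_of_int_floor_add_one_gt)
    from a have "u j \<le> \<theta> j" using m0 by (simp add: mult_le_cancel_left_pos)
    moreover from b have "real m * (\<theta> j - u j) < 1" by (simp add: algebra_simps)
    then have "\<theta> j - u j < 1 / real m" using m0 by (simp add: field_simps)
    ultimately show ?thesis by simp
  qed
  define c1 where "c1 = (\<Sum>j<n. \<bar>x i j\<bar>)"
  have "\<bar>ip n (x i) \<theta> - ip n (x i) u\<bar> = \<bar>\<Sum>j<n. x i j * (\<theta> j - u j)\<bar>"
    by (simp add: ip_def sum_subtractf right_diff_distrib)
  also have "\<dots> \<le> (\<Sum>j<n. \<bar>x i j * (\<theta> j - u j)\<bar>)" by (rule sum_abs)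
  also have "\<dots> \<le> (\<Sum>j<n. \<bar>x i j\<bar> * (1 / real m))"
  proof (intro sum_mono)
    fix j assume "j \<in> {..<n}"
    then have "\<bar>\<theta> j - u j\<bar> \<le> 1 / real m" using err by auto
    then show "\<bar>x i j * (\<theta> j - u j)\<bar> \<le> \<bar>x i j\<bar> * (1 / real m)"
      unfolding abs_mult by (rule mult_left_mono) simp
  qed
  also have "\<dots> = c1 / m" by (simp add: c1_def sum_divide_distrib)
  finally have e1: "ip n (x i) \<theta> \<ge> ip n (x i) u - c1 / m" by linarith
  have "nrm n \<theta> = nrm n (\<lambda>j. u j + (\<theta> j - u j))" by (rule nrm_cong) simp
  also have "\<dots> \<le> nrm n u + nrm n (\<lambda>j. \<theta> j - u j)" by (rule nrm_triangle)
  also have "nrm n (\<lambda>j. \<theta> j - u j) \<le> (\<Sum>j<n. \<bar>\<theta> j - u j\<bar>)"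
    unfolding nrm_L2 by (rule L2_set_le_sum_abs)
  also have "\<dots> \<le> (\<Sum>j<n. 1 / real m)" using err by (intro sum_mono) auto
  also have "\<dots> = n / m" by simp
  finally have e2: "nrm n \<theta> \<le> nrm n u + n / m" by simp
  have c1le: "c1 \<le> (\<Sum>i<N. \<Sum>j<n. \<bar>x i j\<bar>)"
    unfolding c1_def using iN by (intro member_le_sum) (auto intro: sum_nonneg)
  have "r * nrm n \<theta> \<le> r * nrm n u + r * n / m" using mult_left_mono[OF e2 r0] by (simp add: algebra_simps)
  then have "ip n (x i) \<theta> \<ge> r * nrm n \<theta> - (c1 + r * n) / m"
    using e1 hu by (simp add: add_divide_distrib diff_divide_distrib)
  moreover have "(c1 + r * n) / m \<le> ((\<Sum>i<N. \<Sum>j<n. \<bar>x i j\<bar>) + r * n) / m"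
    using c1le m0 by (intro divide_right_mono) auto
  ultimately show ?thesis using iN by (intro exI[of _ i]) auto
qed

lemma hcond_countable:
  fixes x :: "nat \<Rightarrow> nat \<Rightarrow> real" and N :: nat
  assumes N1: "N \<ge> 1" and r0: "r \<ge> 0"
  shows "(\<forall>\<theta>. \<exists>i<N. ip n (x i) \<theta> \<ge> r * nrm n \<theta>) \<longleftrightarrow>
         (\<forall>k\<in>zvecs n. \<exists>i<N. ip n (x i) (zr k) \<ge> r * nrm n (zr k))"
proof
  assume H: "\<forall>k\<in>zvecs n. \<exists>i<N. ip n (x i) (zr k) \<ge> r * nrm n (zr k)"
  show "\<forall>\<theta>. \<exists>i<N. ip n (x i) \<theta> \<ge> r * nrm n \<theta>"
  proof
    fix \<theta> :: "nat \<Rightarrow> real"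
    define c where "c = (\<Sum>i<N. \<Sum>j<n. \<bar>x i j\<bar>) + r * n"
    have c0: "c \<ge> 0" unfolding c_def using r0 by (intro add_nonneg_nonneg sum_nonneg) auto
    define g where "g i = ip n (x i) \<theta>" for i
    define Mx where "Mx = Max (g ` {..<N})"
    have fin: "finite (g ` {..<N})" by (intro finite_imageI) simp
    have "0 \<in> {..<N}" using N1 by simp
    then have ne: "g ` {..<N} \<noteq> {}" by blast
    have gle: "g i \<le> Mx" if "i < N" for i using that fin by (simp add: Mx_def)
    have "Mx \<ge> r * nrm n \<theta>"
    proof (rule ccontr)
      assume nt: "\<not> Mx \<ge> r * nrm n \<theta>"
      define gap where "gap = r * nrm n \<theta> - Mx"
      have gap0: "gap > 0" using nt by (simp add: gap_def)
      define m where "m = nat \<lceil>c / gap\<rceil> + 1"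
      have m0: "m > 0" by (simp add: m_def)
      have "c / gap < m" unfolding m_def by linarith
      then have cm: "c / m < gap" using gap0 m0 c0 by (simp add: field_simps)
      obtain i where iN: "i < N" and hi: "ip n (x i) \<theta> \<ge> r * nrm n \<theta> - c / m"
        using approx_step[OF m0 r0 H, of \<theta>] by (auto simp: c_def)
      then show False using gle[OF iN] cm by (simp add: g_def gap_def)
    qed
    moreover have "Mx \<in> g ` {..<N}" unfolding Mx_def using fin ne by (rule Max_in)
    ultimately show "\<exists>i<N. ip n (x i) \<theta> \<ge> r * nrm n \<theta>" by (auto simp: g_def)
  qed
qed auto

lemma sets_std_normal[simp]: "sets std_normal_distribution = sets borel"
  by simp

lemma meas_coord_g: 
  assumes "j < n" shows "(\<lambda>y. y j) \<in> borel_measurable (std_gauss n)"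
proof -
  have "(\<lambda>y. y j) \<in> measurable (std_gauss n) std_normal_distribution"
    unfolding std_gauss_def by (rule measurable_component_singleton) (use assms in simp)
  moreover have "sets std_normal_distribution = sets borel" by simp
  ultimately show ?thesis using measurable_cong_sets[OF refl, of std_normal_distribution borel "std_gauss n"] by simp
qed

lemma meas_ip_g: "(\<lambda>y. ip n y \<theta>) \<in> borel_measurable (std_gauss n)"
  unfolding ip_def by (intro borel_measurable_sum borel_measurable_times meas_coord_g) auto

lemma meas_comp_s: "i < N \<Longrightarrow> (\<lambda>x. x i) \<in> measurable (gauss_sample n N) (std_gauss n)"
  unfolding gauss_sample_def by (rule measurable_component_singleton) auto

lemma meas_ip_s: "i < N \<Longrightarrow> (\<lambda>x. ip n (x i) \<theta>) \<in> borel_measurable (gauss_sample n N)"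
  using measurable_comp[OF meas_comp_s meas_ip_g] by (simp add: comp_def)

lemma event_eq:
  assumes N1: "N \<ge> 1" and r0: "r \<ge> 0"
  shows "{x \<in> space (gauss_sample n N). subset_n n (ball_n n r) (conv_pts n N x)}
       = {x \<in> space (gauss_sample n N). \<forall>k\<in>zvecs n. \<exists>i\<in>{..<N}. r * nrm n (zr k) \<le> ip n (x i) (zr k)}"
proof -
  have "subset_n n (ball_n n r) (conv_pts n N x) \<longleftrightarrow>
        (\<forall>k\<in>zvecs n. \<exists>i<N. ip n (x i) (zr k) \<ge> r * nrm n (zr k))" for x
    using hcond_imp_subset[OF N1 r0, of n x] subset_imp_hcond[OF N1 r0, of n x]
      hcond_countable[OF N1 r0, of n x] by blast
  then show ?thesis by auto
qed

lemma event_meas: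
  assumes N1: "N \<ge> 1" and r0: "r \<ge> 0"
  shows "{x \<in> space (gauss_sample n N). subset_n n (ball_n n r) (conv_pts n N x)} \<in> sets (gauss_sample n N)"
  unfolding event_eq[OF N1 r0]
proof (rule sets.sets_Collect_countable_All'[OF _ countable_zvecs])
  fix k
  show "{x \<in> space (gauss_sample n N). \<exists>i\<in>{..<N}. r * nrm n (zr k) \<le> ip n (x i) (zr k)} \<in> sets (gauss_sample n N)"
  proof (rule sets.sets_Collect_finite_Ex)
    fix i assume "i \<in> {..<N}"
    then show "{x \<in> space (gauss_sample n N). r * nrm n (zr k) \<le> ip n (x i) (zr k)} \<in> sets (gauss_sample n N)"
      by (intro borel_measurable_le meas_ip_s borel_measurable_const) auto
  qed simp
qed

lemma ps_std_normal: "prob_space std_normal_distribution"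
  by (rule prob_space_normal_density) simp

lemma ps_g: "prob_space (std_gauss n)"
  unfolding std_gauss_def by (intro prob_space_PiM ps_std_normal)

lemma ps_s: "prob_space (gauss_sample n N)"
  unfolding gauss_sample_def by (intro prob_space_PiM ps_g)

lemma indep_components:
  assumes ps: "\<And>i. i \<in> I \<Longrightarrow> prob_space (M i)" and ne: "I \<noteq> {}"
  shows "prob_space.indep_vars (PiM I M) M (\<lambda>i x. x i) I"
proof -
  interpret P: prob_space "PiM I M" by (intro prob_space_PiM ps)
  have rv: "(\<lambda>x. x i) \<in> measurable (PiM I M) (M i)" if "i \<in> I" for i
    using that by (rule measurable_component_singleton)
  show ?thesis
  proof (rule P.indep_vars_iff_distr_eq_PiM'[OF ne rv, THEN iffD2])
    have "distr (PiM I M) (PiM I M) (\<lambda>x. \<lambda>i\<in>I. x i) = distr (PiM I M) (PiM I M) (\<lambda>x. x)"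
      by (intro distr_cong) (auto simp: space_PiM PiE_def extensional_restrict)
    also have "\<dots> = PiM I M" by (rule distr_id)
    also have "\<dots> = PiM I (\<lambda>i. distr (PiM I M) (M i) (\<lambda>x. x i))"
      by (intro PiM_cong refl distr_PiM_component[symmetric] ps) auto
    finally show "distr (PiM I M) (PiM I M) (\<lambda>x. \<lambda>i\<in>I. x i) = PiM I (\<lambda>i. distr (PiM I M) (M i) (\<lambda>x. x i))" .
  qed
qed

lemma dist_comp:
  assumes X: "X \<in> measurable M M'" and eq: "distr M M' X = M'"
    and D: "distributed M' lborel f g"
  shows "distributed M lborel (\<lambda>x. f (X x)) g"
proof -
  have fm: "f \<in> measurable M' lborel" using D by (rule distributed_measurable)
  have "distr M lborel (\<lambda>x. f (X x)) = distr (distr M M' X) lborel f"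
    using distr_distr[OF fm X] by (simp add: comp_def)
  also have "\<dots> = density lborel g" using eq D by (simp add: distributed_distr_eq_density)
  finally show ?thesis using D measurable_compose[OF X fm]
    by (simp add: distributed_def)
qed

lemma gen_sum_normal:
  assumes ps: "\<And>i. i \<in> I \<Longrightarrow> prob_space (M i)" and JI: "J \<subseteq> I" and Jne: "J \<noteq> {}"
    and fin: "finite J"
    and spos: "\<And>i. i \<in> J \<Longrightarrow> \<sigma> i > 0"
    and D: "\<And>i. i \<in> J \<Longrightarrow> distributed (M i) lborel (f i) (normal_density 0 (\<sigma> i))"
  shows "distributed (PiM I M) lborel (\<lambda>x. \<Sum>i\<in>J. f i (x i)) (normal_density 0 (sqrt (\<Sum>i\<in>J. (\<sigma> i)\<^sup>2)))"
proof -
  interpret P: prob_space "PiM I M" by (intro prob_space_PiM ps)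
  have Ine: "I \<noteq> {}" using JI Jne by auto
  have ind: "P.indep_vars M (\<lambda>i x. x i) J"
    using P.indep_vars_subset[OF indep_components[OF ps Ine] JI] ps by blast
  have fm: "f i \<in> borel_measurable (M i)" if "i \<in> J" for i
    using distributed_measurable[OF D[OF that]] by simp
  have "P.indep_vars (\<lambda>_. borel) (\<lambda>i x. f i (x i)) J"
    using P.indep_vars_compose2[OF ind, of f "\<lambda>_. borel"] fm by blast
  moreover have "distributed (PiM I M) lborel (\<lambda>x. f i (x i)) (normal_density 0 (\<sigma> i))" if "i \<in> J" for i
    using that JI by (intro dist_comp[OF _ _ D] measurable_component_singleton distr_PiM_component ps) auto
  ultimately show ?thesis
    using P.sum_indep_normal[OF fin Jne, of "\<lambda>i x. f i (x i)" \<sigma> "\<lambda>_. 0"] spos by simp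
qed

lemma id_normal: "distributed std_normal_distribution lborel (\<lambda>t. t) std_normal_density"
  unfolding distributed_def by (auto simp: distr_id2)

lemma scaled_normal:
  assumes "a \<noteq> 0"
  shows "distributed std_normal_distribution lborel (\<lambda>t. t * a) (normal_density 0 \<bar>a\<bar>)"
  using prob_space.normal_density_affine[OF ps_std_normal id_normal, where \<alpha>=a and \<beta>=0] assms
  by (simp add: mult.commute)

lemma lin_normal:
  assumes np: "nrm n u > 0"
  shows "distributed (std_gauss n) lborel (\<lambda>y. ip n y u) (normal_density 0 (nrm n u))"
proof -
  define J where "J = {j\<in>{..<n}. u j \<noteq> 0}"
  have Jne: "J \<noteq> {}"
  proof
    assume "J = {}"
    then have "\<forall>j<n. u j = 0" by (auto simp: J_def)
    then have "nrm n u = 0" by (simp add: nrm_zero_iff)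
    then show False using np by simp
  qed
  have JI: "J \<subseteq> {..<n}" and finJ: "finite J" by (auto simp: J_def)
  have "distributed (PiM {..<n} (\<lambda>_. std_normal_distribution)) lborel (\<lambda>y. \<Sum>j\<in>J. y j * u j)
         (normal_density 0 (sqrt (\<Sum>j\<in>J. \<bar>u j\<bar>\<^sup>2)))"
    by (rule gen_sum_normal[OF ps_std_normal JI Jne finJ, where \<sigma>="\<lambda>j. \<bar>u j\<bar>" and f="\<lambda>j t. t * u j"])
       (auto simp: J_def intro: scaled_normal)
  moreover have "(\<lambda>y. \<Sum>j\<in>J. y j * u j) = (\<lambda>y. ip n y u)"
    unfolding ip_def by (intro ext sum.mono_neutral_left) (auto simp: J_def)
  moreover have "sqrt (\<Sum>j\<in>J. \<bar>u j\<bar>\<^sup>2) = nrm n u"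
    unfolding nrm_def by (simp, intro sum.mono_neutral_left) (auto simp: J_def)
  ultimately show ?thesis by (simp add: std_gauss_def)
qed

lemma sum_normal:
  assumes SN: "S \<subseteq> {..<N}" and Sne: "S \<noteq> {}" and np: "nrm n u > 0"
  shows "distributed (gauss_sample n N) lborel (\<lambda>x. \<Sum>i\<in>S. ip n (x i) u)
           (normal_density 0 (sqrt (card S) * nrm n u))"
proof -
  have finS: "finite S" using SN finite_subset by blast
  have "distributed (gauss_sample n N) lborel (\<lambda>x. \<Sum>i\<in>S. ip n (x i) u)
           (normal_density 0 (sqrt (\<Sum>i\<in>S. (nrm n u)\<^sup>2)))"
    unfolding gauss_sample_def
    by (rule gen_sum_normal[OF ps_g SN Sne finS, where \<sigma>="\<lambda>_. nrm n u" and f="\<lambda>_ y. ip n y u"])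
       (auto simp: np lin_normal)
  moreover have "sqrt (\<Sum>i\<in>S. (nrm n u)\<^sup>2) = sqrt (card S) * nrm n u"
    by (simp add: real_sqrt_mult)
  ultimately show ?thesis by simp
qed

lemma nn_int_normal:
  assumes "\<sigma> > 0"
  shows "(\<integral>\<^sup>+x. ennreal (normal_density \<mu> \<sigma> x) \<partial>lborel) = 1"
proof -
  interpret prob_space "density lborel (normal_density \<mu> \<sigma>)"
    by (rule prob_space_normal_density) (use assms in simp)
  have "emeasure (density lborel (normal_density \<mu> \<sigma>)) UNIV = 1"
    using emeasure_space_1 by simp
  then show ?thesis by (simp add: emeasure_density)
qed

lemma tail_up_pt:
  assumes s: "\<sigma> > 0" and c: "c \<ge> 0" and x: "x \<ge> c"
  shows "normal_density 0 \<sigma> x \<le> exp (-c\<^sup>2 / (2 * \<sigma>\<^sup>2)) * normal_density c \<sigma> x"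
proof -
  have "-(x\<^sup>2) \<le> -(c\<^sup>2) - (x - c)\<^sup>2"
  proof -
    have "c * (x - c) \<ge> 0" using c x by simp
    then show ?thesis by (simp add: power2_eq_square algebra_simps)
  qed
  then have "-(x\<^sup>2) / (2 * \<sigma>\<^sup>2) \<le> (-(c\<^sup>2) - (x - c)\<^sup>2) / (2 * \<sigma>\<^sup>2)"
    using s by (intro divide_right_mono) auto
  then have "exp (-(x\<^sup>2) / (2 * \<sigma>\<^sup>2)) \<le> exp (-c\<^sup>2 / (2 * \<sigma>\<^sup>2)) * exp (-(x - c)\<^sup>2 / (2 * \<sigma>\<^sup>2))"
    by (simp add: exp_add[symmetric] diff_divide_distrib)
  then show ?thesis unfolding normal_density_def
    by (simp add: mult.left_commute[of "exp _"] divide_right_mono)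
qed

lemma tail_up:
  assumes ps: "prob_space M" and D: "distributed M lborel X (normal_density 0 \<sigma>)"
    and s: "\<sigma> > 0" and c: "c \<ge> 0"
  shows "measure M {\<omega>\<in>space M. X \<omega> \<ge> c} \<le> exp (-c\<^sup>2 / (2 * \<sigma>\<^sup>2))"
proof -
  interpret prob_space M by (rule ps)
  have set: "{\<omega>\<in>space M. X \<omega> \<ge> c} = X -` {c..} \<inter> space M" by auto
  have "emeasure M (X -` {c..} \<inter> space M) = (\<integral>\<^sup>+x. ennreal (normal_density 0 \<sigma> x) * indicator {c..} x \<partial>lborel)"
    by (rule distributed_emeasure[OF D]) simp
  also have "\<dots> \<le> (\<integral>\<^sup>+x. ennreal (exp (-c\<^sup>2 / (2 * \<sigma>\<^sup>2))) * ennreal (normal_density c \<sigma> x) \<partial>lborel)"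
  proof (intro nn_integral_mono)
    fix x
    show "ennreal (normal_density 0 \<sigma> x) * indicator {c..} x \<le> ennreal (exp (-c\<^sup>2 / (2 * \<sigma>\<^sup>2))) * ennreal (normal_density c \<sigma> x)"
    proof (cases "x \<ge> c")
      case True
      then show ?thesis using tail_up_pt[OF s c True]
        by (simp add: ennreal_mult[symmetric] ennreal_leI)
    qed simp
  qed
  also have "\<dots> = ennreal (exp (-c\<^sup>2 / (2 * \<sigma>\<^sup>2)))"
    by (simp add: nn_integral_cmult nn_int_normal[OF s])
  finally have "emeasure M {\<omega>\<in>space M. X \<omega> \<ge> c} \<le> ennreal (exp (-c\<^sup>2 / (2 * \<sigma>\<^sup>2)))"
    using set by simp
  then show ?thesis by (simp add: emeasure_eq_measure)
qed

lemma const_bound: "exp (3/2::real) * sqrt (2 * pi) \<le> 27"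
proof -
  have "exp (3/2::real) \<le> exp 2" by simp
  also have "exp (2::real) = exp 1 * exp 1" by (simp flip: exp_add)
  also have "\<dots> \<le> 3 * 3" using exp_le by (intro mult_mono) auto
  finally have e: "exp (3/2::real) \<le> 9" by simp
  have "2 * pi \<le> (3::real)\<^sup>2" using pi_less_4 by simp
  then have "sqrt (2 * pi) \<le> sqrt ((3::real)\<^sup>2)" by (rule real_sqrt_le_mono)
  then have "sqrt (2 * pi) \<le> 3" by simp
  then show ?thesis using e by (intro order.trans[OF mult_mono[OF e]]) auto
qed

lemma tail_low_real:
  assumes s: "\<sigma> > 0" and c: "\<sigma> \<le> c"
  shows "normal_density 0 \<sigma> (c + \<sigma>\<^sup>2 / c) * (\<sigma>\<^sup>2 / c) \<ge> exp (-c\<^sup>2 / (2 * \<sigma>\<^sup>2)) * \<sigma> / (27 * c)"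
proof -
  have c0: "c > 0" using s c by simp
  define a where "a = c + \<sigma>\<^sup>2 / c"
  have "\<sigma>\<^sup>2 / c * (\<sigma>\<^sup>2 / c) \<le> \<sigma>\<^sup>2"
  proof -
    have "\<sigma>\<^sup>2 \<le> c\<^sup>2" using s c by (intro power_mono) auto
    then have "\<sigma>\<^sup>2 * \<sigma>\<^sup>2 \<le> \<sigma>\<^sup>2 * c\<^sup>2" using s by (intro mult_left_mono) auto
    then show ?thesis using c0 by (simp add: field_simps power2_eq_square)
  qed
  then have a2: "a\<^sup>2 \<le> c\<^sup>2 + 3 * \<sigma>\<^sup>2"
    using c0 by (simp add: a_def power2_sum field_simps power2_eq_square)
  have "-(c\<^sup>2 + 3 * \<sigma>\<^sup>2) / (2 * \<sigma>\<^sup>2) \<le> -(a\<^sup>2) / (2 * \<sigma>\<^sup>2)"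
    using a2 s by (intro divide_right_mono) auto
  moreover have "-(c\<^sup>2 + 3 * \<sigma>\<^sup>2) / (2 * \<sigma>\<^sup>2) = -c\<^sup>2 / (2 * \<sigma>\<^sup>2) - 3/2"
    using s by (simp add: field_simps)
  ultimately have ea: "exp (-c\<^sup>2 / (2 * \<sigma>\<^sup>2)) * exp (-(3/2)) \<le> exp (-(a\<^sup>2) / (2 * \<sigma>\<^sup>2))"
    by (simp flip: exp_add)
  have sq: "sqrt (2 * pi * \<sigma>\<^sup>2) = sqrt (2 * pi) * \<sigma>"
    using s by (simp add: real_sqrt_mult)
  have "normal_density 0 \<sigma> a * (\<sigma>\<^sup>2 / c) = exp (-(a\<^sup>2) / (2 * \<sigma>\<^sup>2)) * \<sigma> / (sqrt (2 * pi) * c)"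
    unfolding normal_density_def sq using s c0 by (simp add: field_simps power2_eq_square)
  also have "\<dots> \<ge> exp (-c\<^sup>2 / (2 * \<sigma>\<^sup>2)) * exp (-(3/2)) * \<sigma> / (sqrt (2 * pi) * c)"
    using ea s c0 by (intro divide_right_mono mult_right_mono) auto
  finally have l: "normal_density 0 \<sigma> a * (\<sigma>\<^sup>2 / c) \<ge> exp (-c\<^sup>2 / (2 * \<sigma>\<^sup>2)) * \<sigma> / c * (exp (-(3/2)) / sqrt (2 * pi))"
    by (simp add: field_simps)
  have "1 / 27 \<le> exp (-(3/2)) / sqrt (2 * pi)"
    using const_bound by (simp add: exp_minus field_simps)
  then have "exp (-c\<^sup>2 / (2 * \<sigma>\<^sup>2)) * \<sigma> / c * (1 / 27) \<le> exp (-c\<^sup>2 / (2 * \<sigma>\<^sup>2)) * \<sigma> / c * (exp (-(3/2)) / sqrt (2 * pi))"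
    using s c0 by (intro mult_left_mono) auto
  with l show ?thesis by (simp add: a_def)
qed

lemma tail_low:
  assumes ps: "prob_space M" and D: "distributed M lborel X (normal_density 0 \<sigma>)"
    and s: "\<sigma> > 0" and c: "\<sigma> \<le> c"
  shows "measure M {\<omega>\<in>space M. X \<omega> \<ge> c} \<ge> exp (-c\<^sup>2 / (2 * \<sigma>\<^sup>2)) * \<sigma> / (27 * c)"
proof -
  interpret prob_space M by (rule ps)
  have c0: "c > 0" using s c by simp
  define h where "h = \<sigma>\<^sup>2 / c"
  have h0: "h > 0" using s c0 by (simp add: h_def)
  define a where "a = c + h"
  have Xm: "X \<in> borel_measurable M" using distributed_measurable[OF D] by simp
  have "emeasure M (X -` {c..a} \<inter> space M) = (\<integral>\<^sup>+x. ennreal (normal_density 0 \<sigma> x) * indicator {c..a} x \<partial>lborel)"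
    by (rule distributed_emeasure[OF D]) simp
  also have "\<dots> \<ge> (\<integral>\<^sup>+x. ennreal (normal_density 0 \<sigma> a) * indicator {c..a} x \<partial>lborel)"
  proof (intro nn_integral_mono)
    fix x
    show "ennreal (normal_density 0 \<sigma> a) * indicator {c..a} x \<le> ennreal (normal_density 0 \<sigma> x) * indicator {c..a} x"
    proof (cases "x \<in> {c..a}")
      case True
      then have "x\<^sup>2 \<le> a\<^sup>2" using c0 by (intro power_mono) auto
      then have "-(a\<^sup>2) / (2 * \<sigma>\<^sup>2) \<le> -(x\<^sup>2) / (2 * \<sigma>\<^sup>2)" using s by (intro divide_right_mono) auto
      then have "normal_density 0 \<sigma> a \<le> normal_density 0 \<sigma> x"
        unfolding normal_density_def by (intro mult_left_mono) auto
      then show ?thesis using True by (simp add: ennreal_leI)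
    qed simp
  qed
  also have "(\<integral>\<^sup>+x. ennreal (normal_density 0 \<sigma> a) * indicator {c..a} x \<partial>lborel) = ennreal (normal_density 0 \<sigma> a * h)"
    using h0 by (simp add: nn_integral_cmult_indicator a_def ennreal_mult)
  finally have e1: "ennreal (normal_density 0 \<sigma> a * h) \<le> emeasure M (X -` {c..a} \<inter> space M)" .
  have "X -` {c..a} \<inter> space M \<subseteq> {\<omega>\<in>space M. X \<omega> \<ge> c}" by auto
  moreover have "{\<omega>\<in>space M. X \<omega> \<ge> c} \<in> sets M" using Xm by measurable
  ultimately have "emeasure M (X -` {c..a} \<inter> space M) \<le> emeasure M {\<omega>\<in>space M. X \<omega> \<ge> c}"
    by (rule emeasure_mono)
  with e1 have "normal_density 0 \<sigma> a * h \<le> measure M {\<omega>\<in>space M. X \<omega> \<ge> c}"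
    by (simp add: emeasure_eq_measure)
  moreover have "normal_density 0 \<sigma> a * h \<ge> exp (-c\<^sup>2 / (2 * \<sigma>\<^sup>2)) * \<sigma> / (27 * c)"
    using tail_low_real[OF s c] by (simp add: a_def h_def)
  ultimately show ?thesis by linarith
qed

lemma geom_bound:
  assumes l: "l > 0"
  shows "(\<Sum>i\<in>{1..M}. exp (- l * real i)) \<le> 1 / l"
proof -
  define q where "q = exp (- l)"
  have q0: "0 < q" and q1: "q < 1" using l by (auto simp: q_def)
  have "(\<Sum>i\<in>{1..M}. exp (- l * real i)) = (\<Sum>i\<in>{1..M}. q ^ i)"
    by (intro sum.cong refl) (simp add: q_def flip: exp_of_nat_mult)
  also have "\<dots> \<le> q / (1 - q)"
  proof (cases "M < 1")
    case True then show ?thesis using q0 q1 by simp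
  next
    case False
    then have "(\<Sum>i\<in>{1..M}. q ^ i) = (q ^ 1 - q ^ Suc M) / (1 - q)"
      using q1 by (subst sum_gp) auto
    also have "\<dots> \<le> q / (1 - q)" using q0 q1 by (intro divide_right_mono) auto
    finally show ?thesis .
  qed
  also have "\<dots> \<le> 1 / l"
  proof -
    have "1 + l \<le> exp l" by (rule exp_ge_add_one_self)
    then have "q * (1 + l) \<le> 1" using q0 by (simp add: q_def exp_minus field_simps)
    then show ?thesis using q0 q1 l by (simp add: field_simps)
  qed
  finally show ?thesis .
qed

lemma gsum_bound:
  assumes l: "l > 0"
  shows "(\<Sum>z\<in>{-int M..int M}. exp (- l * (real_of_int z)\<^sup>2)) \<le> 1 + 2 / l"
proof -
  let ?f = "\<lambda>z::int. exp (- l * (real_of_int z)\<^sup>2)"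
  have split: "{-int M..int M} = uminus ` {1..int M} \<union> {0..int M}" 
  proof (rule set_eqI)
    fix z :: int
    show "z \<in> {-int M..int M} \<longleftrightarrow> z \<in> uminus ` {1..int M} \<union> {0..int M}"
    proof
      assume "z \<in> {-int M..int M}"
      then show "z \<in> uminus ` {1..int M} \<union> {0..int M}"
        by (cases "z \<ge> 0") (auto intro!: image_eqI[of z uminus "-z"])
    qed auto
  qed
  have disj: "uminus ` {1..int M} \<inter> {0..int M} = {}" by auto
  have "(\<Sum>z\<in>{-int M..int M}. ?f z) = (\<Sum>z\<in>uminus ` {1..int M}. ?f z) + (\<Sum>z\<in>{0..int M}. ?f z)"
    unfolding split by (rule sum.union_disjoint) (use disj in auto)
  also have "(\<Sum>z\<in>uminus ` {1..int M}. ?f z) = (\<Sum>z\<in>{1..int M}. ?f z)"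
    by (subst sum.reindex) (auto simp: inj_on_def)
  also have "(\<Sum>z\<in>{0..int M}. ?f z) = ?f 0 + (\<Sum>z\<in>{1..int M}. ?f z)"
  proof -
    have "{0..int M} = insert 0 {1..int M}" by auto
    then show ?thesis by simp
  qed
  also have "(\<Sum>z\<in>{1..int M}. ?f z) = (\<Sum>i\<in>{1..M}. ?f (int i))"
  proof -
    have e: "{1..int M} = int ` {1..M}" by (simp add: image_int_atLeastAtMost)
    show ?thesis unfolding e by (subst sum.reindex) (auto simp: inj_on_def)
  qed
  also have "\<dots> \<le> (\<Sum>i\<in>{1..M}. exp (- l * real i))"
  proof (intro sum_mono)
    fix i assume "i \<in> {1..M}"
    then have "real i \<le> (real i)\<^sup>2" by (simp add: power2_eq_square)
    then show "?f (int i) \<le> exp (- l * real i)" using l by simp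
  qed
  also have "\<dots> \<le> 1 / l" by (rule geom_bound[OF l])
  finally show ?thesis by simp
qed

definition mres :: "real \<Rightarrow> nat \<Rightarrow> nat" where
  "mres \<delta> n = nat \<lceil>sqrt (real n) / \<delta>\<rceil>"

definition vec :: "nat \<Rightarrow> nat \<Rightarrow> (nat \<Rightarrow> int) \<Rightarrow> nat \<Rightarrow> real" where
  "vec n m k = (\<lambda>j. if j < n then real_of_int (k j) / real m else 0)"

definition boxz :: "nat \<Rightarrow> nat \<Rightarrow> (nat \<Rightarrow> int) set" where
  "boxz n M = PiE {..<n} (\<lambda>_. {-int M..int M})"

definition netk :: "real \<Rightarrow> nat \<Rightarrow> (nat \<Rightarrow> int) set" where
  "netk \<delta> n = {k \<in> boxz n (2 * mres \<delta> n). 1 - \<delta> \<le> nrm n (vec n (mres \<delta> n) k) \<and> nrm n (vec n (mres \<delta> n) k) \<le> 1 + \<delta>}"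

definition net :: "real \<Rightarrow> nat \<Rightarrow> (nat \<Rightarrow> real) set" where
  "net \<delta> n = vec n (mres \<delta> n) ` netk \<delta> n"

context
  fixes \<delta> :: real and n :: nat
  assumes d0: "0 < \<delta>" and d1: "\<delta> \<le> 1" and n1: "n \<ge> 1"
begin

lemma sqrtn_ge1: "sqrt (real n) \<ge> 1" using n1 by simp

lemma mres_ge: "real (mres \<delta> n) \<ge> sqrt (real n) / \<delta>"
  unfolding mres_def by linarith

lemma mres_pos: "real (mres \<delta> n) \<ge> 1"
proof -
  have "sqrt (real n) / \<delta> \<ge> 1" using sqrtn_ge1 d0 d1 by (simp add: field_simps del: real_sqrt_ge_1_iff)
  then show ?thesis using mres_ge by linarith
qed

lemma mres_le: "real (mres \<delta> n) \<le> 2 * sqrt (real n) / \<delta>"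
proof -
  have a: "sqrt (real n) / \<delta> \<ge> 1" using sqrtn_ge1 d0 d1 by (simp add: field_simps del: real_sqrt_ge_1_iff)
  have "real (mres \<delta> n) < sqrt (real n) / \<delta> + 1"
    unfolding mres_def using a by linarith
  then show ?thesis using a by linarith
qed

lemma net_fin: "finite (net \<delta> n)"
proof -
  have "finite (boxz n (2 * mres \<delta> n))" unfolding boxz_def by (intro finite_PiE) auto
  then show ?thesis unfolding net_def netk_def by auto
qed

lemma net_nrm: "u \<in> net \<delta> n \<Longrightarrow> 1 - \<delta> \<le> nrm n u \<and> nrm n u \<le> 1 + \<delta>"
  unfolding net_def netk_def by auto

lemma abs_le_nrm: "j < n \<Longrightarrow> \<bar>\<theta> j\<bar> \<le> nrm n \<theta>"
proof -
  assume j: "j < n"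
  have "(\<theta> j)\<^sup>2 \<le> (\<Sum>i<n. (\<theta> i)\<^sup>2)" using j by (intro member_le_sum) auto
  then have "sqrt ((\<theta> j)\<^sup>2) \<le> sqrt (\<Sum>i<n. (\<theta> i)\<^sup>2)" by (rule real_sqrt_le_mono)
  then show ?thesis by (simp add: nrm_def)
qed

lemma nrm_diff_sym: "nrm n (\<lambda>j. a j - b j) = nrm n (\<lambda>j. b j - a j)"
  unfolding nrm_def by (simp add: power2_commute)

lemma net_approx:
  assumes t1: "nrm n \<theta> = 1"
  shows "\<exists>u\<in>net \<delta> n. nrm n (\<lambda>j. \<theta> j - u j) \<le> \<delta>"
proof -
  define m where "m = mres \<delta> n"
  have m1: "real m \<ge> 1" using mres_pos by (simp add: m_def)
  define k where "k = restrict (\<lambda>j. \<lfloor>real m * \<theta> j\<rfloor>) {..<n}"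
  define u where "u = vec n m k"
  have err: "0 \<le> \<theta> j - u j \<and> \<theta> j - u j \<le> 1 / real m" if "j < n" for j
  proof -
    have uj: "real m * u j = real_of_int \<lfloor>real m * \<theta> j\<rfloor>"
      using that m1 by (simp add: u_def vec_def k_def)
    have a: "real m * u j \<le> real m * \<theta> j" unfolding uj by (rule of_int_floor_le)
    have b: "real m * \<theta> j < real m * u j + 1" unfolding uj by (rule real_of_int_floor_add_one_gt)
    from a have "u j \<le> \<theta> j" using m1 by (simp add: mult_le_cancel_left_pos)
    moreover from b have "real m * (\<theta> j - u j) < 1" by (simp add: algebra_simps)
    then have "\<theta> j - u j < 1 / real m" using m1 by (simp add: field_simps)
    ultimately show ?thesis by simp
  qed
  have kbox: "k \<in> boxz n (2 * m)"
  proof -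
    have "k j \<in> {- int (2 * m)..int (2 * m)}" if "j < n" for j
    proof -
      have "\<bar>\<theta> j\<bar> \<le> 1" using abs_le_nrm[OF that, of \<theta>] t1 by simp
      then have "\<bar>real m * \<theta> j\<bar> \<le> real m" using m1 by (simp add: abs_mult mult_left_le)
      then have "- real m \<le> real m * \<theta> j" "real m * \<theta> j \<le> real m" by linarith+
      then have "- real m - 1 < real_of_int \<lfloor>real m * \<theta> j\<rfloor>" "real_of_int \<lfloor>real m * \<theta> j\<rfloor> \<le> real m"
        by linarith+
      then have "- int m - 1 < \<lfloor>real m * \<theta> j\<rfloor>" "\<lfloor>real m * \<theta> j\<rfloor> \<le> int m" by linarith+
      then show ?thesis using that m1 by (simp add: k_def)
    qed
    then show ?thesis by (auto simp: boxz_def k_def)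
  qed
  have dist: "nrm n (\<lambda>j. \<theta> j - u j) \<le> \<delta>"
  proof -
    have "(\<Sum>j<n. (\<theta> j - u j)\<^sup>2) \<le> (\<Sum>j<n. (1 / real m)\<^sup>2)"
      using err by (intro sum_mono power_mono) auto
    also have "\<dots> = real n / (real m)\<^sup>2" by (simp add: power_divide)
    finally have "nrm n (\<lambda>j. \<theta> j - u j) \<le> sqrt (real n / (real m)\<^sup>2)"
      unfolding nrm_def by (rule real_sqrt_le_mono)
    also have "\<dots> = sqrt (real n) / real m" using m1 by (simp add: real_sqrt_divide)
    also have "\<dots> \<le> \<delta>" using mres_ge m1 d0 by (simp add: m_def field_simps)
    finally show ?thesis .
  qed
  have "nrm n \<theta> \<le> nrm n u + nrm n (\<lambda>j. \<theta> j - u j)"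
    using nrm_triangle[of n u "\<lambda>j. \<theta> j - u j"] by simp
  moreover have "nrm n u \<le> nrm n \<theta> + nrm n (\<lambda>j. u j - \<theta> j)"
    using nrm_triangle[of n \<theta> "\<lambda>j. u j - \<theta> j"] by simp
  ultimately have "1 - \<delta> \<le> nrm n u \<and> nrm n u \<le> 1 + \<delta>"
    using dist t1 nrm_diff_sym[of \<theta> u] by linarith
  then have "u \<in> net \<delta> n" using kbox unfolding net_def netk_def u_def m_def by auto
  then show ?thesis using dist by blast
qed

end

lemma unit_scale:
  assumes "nrm n \<theta> > 0"
  shows "nrm n (\<lambda>j. (1 / nrm n \<theta>) * \<theta> j) = 1"
  using assms unfolding nrm_scale by simp

lemma det_unit:
  fixes x :: "nat \<Rightarrow> nat \<Rightarrow> real"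
  assumes d0: "0 < \<delta>" and d1: "\<delta> \<le> 1/4" and n1: "n \<ge> 1" and B0: "B \<ge> 0"
    and tr: "t - B * \<delta> / (1 - \<delta>) \<ge> r"
    and G1: "\<forall>u\<in>net \<delta> n. \<exists>S. S \<subseteq> {..<N} \<and> card S = n \<and> (\<forall>i\<in>S. ip n (x i) u \<ge> t)"
    and G2: "\<forall>S. S \<subseteq> {..<N} \<and> card S = n \<longrightarrow> (\<forall>u\<in>net \<delta> n. (\<Sum>i\<in>S. ip n (x i) u) < B * n)"
    and th: "nrm n \<theta> = 1"
  shows "\<exists>i<N. ip n (x i) \<theta> \<ge> r"
proof -
  have d1': "\<delta> \<le> 1" using d1 by simp
  obtain u where u: "u \<in> net \<delta> n" and du: "nrm n (\<lambda>j. \<theta> j - u j) \<le> \<delta>"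
    using net_approx[OF d0 d1' n1 th] by blast
  obtain S where SN: "S \<subseteq> {..<N}" and cS: "card S = n" and St: "\<forall>i\<in>S. ip n (x i) u \<ge> t"
    using G1 u by blast
  have finS: "finite S" using SN finite_subset by blast
  define v where "v = (\<lambda>j. \<Sum>i\<in>S. x i j)"
  have ipv: "ip n v w = (\<Sum>i\<in>S. ip n (x i) w)" for w unfolding v_def by (rule ip_sum_left)
  have nv: "nrm n v * (1 - \<delta>) \<le> B * n"
  proof (cases "nrm n v = 0")
    case True then show ?thesis using B0 by simp
  next
    case False
    then have nv0: "nrm n v > 0" using nrm_nonneg[of n v] by linarith
    define w where "w = (\<lambda>j. (1 / nrm n v) * v j)"
    have w1: "nrm n w = 1" unfolding w_def by (rule unit_scale[OF nv0])
    obtain u' where u': "u' \<in> net \<delta> n" and du': "nrm n (\<lambda>j. w j - u' j) \<le> \<delta>"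
      using net_approx[OF d0 d1' n1 w1] by blast
    have "ip n v w = (1 / nrm n v) * ip n v v" unfolding w_def by (rule ip_scale_right)
    then have ivw: "ip n v w = nrm n v" using nv0 by (simp add: ip_self power2_eq_square)
    have "ip n v (\<lambda>j. w j - u' j) \<le> nrm n v * nrm n (\<lambda>j. w j - u' j)" by (rule cs)
    also have "\<dots> \<le> nrm n v * \<delta>" using du' by (intro mult_left_mono) auto
    finally have e: "ip n v (\<lambda>j. w j - u' j) \<le> nrm n v * \<delta>" .
    have "ip n v u' = ip n v w - ip n v (\<lambda>j. w j - u' j)" by (simp add: ip_diff_right)
    then have "ip n v u' \<ge> nrm n v * (1 - \<delta>)" using ivw e by (simp add: algebra_simps)
    moreover have "ip n v u' < B * n" using G2 SN cS u' by (simp add: ipv)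
    ultimately show ?thesis by linarith
  qed
  have nvB: "nrm n v \<le> B * n / (1 - \<delta>)" using nv d1 by (simp add: field_simps)
  have "ip n v \<theta> = ip n v u + ip n v (\<lambda>j. \<theta> j - u j)" by (simp add: ip_diff_right)
  moreover have "ip n v (\<lambda>j. \<theta> j - u j) \<ge> - (nrm n v * \<delta>)"
  proof -
    have "\<bar>ip n v (\<lambda>j. \<theta> j - u j)\<bar> \<le> nrm n v * nrm n (\<lambda>j. \<theta> j - u j)" by (rule cs_abs)
    also have "\<dots> \<le> nrm n v * \<delta>" using du by (intro mult_left_mono) auto
    finally show ?thesis by linarith
  qed
  moreover have "ip n v u \<ge> n * t"
  proof -
    have "(\<Sum>i\<in>S. t) \<le> (\<Sum>i\<in>S. ip n (x i) u)" using St by (intro sum_mono) auto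
    then show ?thesis using cS by (simp add: ipv)
  qed
  moreover have "nrm n v * \<delta> \<le> B * n / (1 - \<delta>) * \<delta>" using nvB d0 by (intro mult_right_mono) auto
  ultimately have "ip n v \<theta> \<ge> n * t - B * n / (1 - \<delta>) * \<delta>" by linarith
  also have "n * t - B * n / (1 - \<delta>) * \<delta> = n * (t - B * \<delta> / (1 - \<delta>))" by (simp add: algebra_simps)
  also have "\<dots> \<ge> n * r" using tr by (intro mult_left_mono) auto
  finally have sumr: "(\<Sum>i\<in>S. ip n (x i) \<theta>) \<ge> n * r" by (simp add: ipv)
  show ?thesis
  proof (rule ccontr)
    assume "\<not> ?thesis"
    then have lt: "\<forall>i\<in>S. ip n (x i) \<theta> < r" using SN by auto
    have Sne: "S \<noteq> {}" using cS n1 by auto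
    have "(\<Sum>i\<in>S. ip n (x i) \<theta>) < (\<Sum>i\<in>S. r)" using finS Sne lt by (intro sum_strict_mono) auto
    then show False using sumr cS by simp
  qed
qed

lemma det_all:
  fixes x :: "nat \<Rightarrow> nat \<Rightarrow> real"
  assumes d0: "0 < \<delta>" and d1: "\<delta> \<le> 1/4" and n1: "n \<ge> 1" and B0: "B \<ge> 0" and N1: "N \<ge> 1"
    and r0: "r \<ge> 0"
    and tr: "t - B * \<delta> / (1 - \<delta>) \<ge> r"
    and G1: "\<forall>u\<in>net \<delta> n. \<exists>S. S \<subseteq> {..<N} \<and> card S = n \<and> (\<forall>i\<in>S. ip n (x i) u \<ge> t)"
    and G2: "\<forall>S. S \<subseteq> {..<N} \<and> card S = n \<longrightarrow> (\<forall>u\<in>net \<delta> n. (\<Sum>i\<in>S. ip n (x i) u) < B * n)"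
  shows "\<forall>\<theta>. \<exists>i<N. ip n (x i) \<theta> \<ge> r * nrm n \<theta>"
proof
  fix \<theta>
  show "\<exists>i<N. ip n (x i) \<theta> \<ge> r * nrm n \<theta>"
  proof (cases "nrm n \<theta> = 0")
    case True
    then have "ip n (x 0) \<theta> = 0" by (simp add: nrm_zero_iff ip_def)
    then show ?thesis using N1 True by (intro exI[of _ 0]) auto
  next
    case False
    then have np: "nrm n \<theta> > 0" using nrm_nonneg[of n \<theta>] by linarith
    define \<theta>' where "\<theta>' = (\<lambda>j. (1 / nrm n \<theta>) * \<theta> j)"
    have "nrm n \<theta>' = 1" unfolding \<theta>'_def by (rule unit_scale[OF np])
    then obtain i where iN: "i < N" and hi: "ip n (x i) \<theta>' \<ge> r"
      using det_unit[OF d0 d1 n1 B0 tr G1 G2] by blast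
    have "ip n (x i) \<theta>' = (1 / nrm n \<theta>) * ip n (x i) \<theta>" unfolding \<theta>'_def by (rule ip_scale_right)
    then have "ip n (x i) \<theta> = nrm n \<theta> * ip n (x i) \<theta>'" using np by simp
    also have "\<dots> \<ge> nrm n \<theta> * r" using hi np by (intro mult_left_mono) auto
    finally show ?thesis using iN by (auto simp: mult.commute)
  qed
qed

context
  fixes \<delta> :: real and n :: nat
  assumes d0: "0 < \<delta>" and d1: "\<delta> \<le> 1" and n1: "n \<ge> 1"
begin

lemma net_card: "real (card (net \<delta> n)) \<le> (exp 1 * (1 + 32 / \<delta>\<^sup>2)) ^ n"
proof -
  define m where "m = mres \<delta> n"
  have m1: "real m \<ge> 1" using mres_pos[OF d0 d1 n1] by (simp add: m_def)
  have mle: "real m \<le> 2 * sqrt (real n) / \<delta>" using mres_le[OF d0 d1 n1] by (simp add: m_def)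
  define box where "box = boxz n (2 * m)"
  have finbox: "finite box" unfolding box_def boxz_def by (intro finite_PiE) auto
  define B where "B = {k \<in> box. (\<Sum>j<n. (real_of_int (k j))\<^sup>2) \<le> 4 * (real m)\<^sup>2}"
  have finB: "finite B" using finbox by (simp add: B_def)
  have nsq: "(nrm n (vec n m k))\<^sup>2 = (\<Sum>j<n. (real_of_int (k j))\<^sup>2) / (real m)\<^sup>2" for k
    unfolding nrm_sq by (simp add: vec_def power_divide sum_divide_distrib)
  have sub: "netk \<delta> n \<subseteq> B"
  proof
    fix k assume k: "k \<in> netk \<delta> n"
    then have kb: "k \<in> box" and nk: "nrm n (vec n m k) \<le> 1 + \<delta>"
      by (auto simp: netk_def box_def m_def)
    have "nrm n (vec n m k) \<le> 2" using nk d1 by linarith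
    then have "(nrm n (vec n m k))\<^sup>2 \<le> 2\<^sup>2" by (intro power_mono) auto
    then have "(\<Sum>j<n. (real_of_int (k j))\<^sup>2) / (real m)\<^sup>2 \<le> 4" by (simp add: nsq)
    then have "(\<Sum>j<n. (real_of_int (k j))\<^sup>2) \<le> 4 * (real m)\<^sup>2" using m1 by (simp add: field_simps)
    then show "k \<in> B" using kb by (simp add: B_def)
  qed
  have "card (net \<delta> n) \<le> card (netk \<delta> n)" unfolding net_def by (rule card_image_le) (use finB sub finite_subset in blast)
  also have "\<dots> \<le> card B" using finB sub by (rule card_mono)
  finally have c1: "real (card (net \<delta> n)) \<le> real (card B)" by simp
  define l where "l = real n / (4 * (real m)\<^sup>2)"
  have l0: "l > 0" using n1 m1 by (simp add: l_def)
  define g where "g k = exp (l * (4 * (real m)\<^sup>2 - (\<Sum>j<n. (real_of_int (k j))\<^sup>2)))" for k :: "nat \<Rightarrow> int"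
  have "real (card B) = (\<Sum>k\<in>B. 1)" by simp
  also have "\<dots> \<le> (\<Sum>k\<in>B. g k)"
  proof (intro sum_mono)
    fix k assume "k \<in> B"
    then have "0 \<le> l * (4 * (real m)\<^sup>2 - (\<Sum>j<n. (real_of_int (k j))\<^sup>2))"
      using l0 by (simp add: B_def)
    then show "1 \<le> g k" by (simp add: g_def)
  qed
  also have "\<dots> \<le> (\<Sum>k\<in>box. g k)"
    using finbox by (intro sum_mono2) (auto simp: B_def g_def)
  also have "\<dots> = (\<Sum>k\<in>box. exp (real n) * (\<Prod>j<n. exp (- l * (real_of_int (k j))\<^sup>2)))"
  proof (intro sum.cong refl)
    fix k
    have "l * (4 * (real m)\<^sup>2 - (\<Sum>j<n. (real_of_int (k j))\<^sup>2)) = real n + (\<Sum>j<n. - l * (real_of_int (k j))\<^sup>2)"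
      using m1 by (simp add: l_def sum_distrib_left right_diff_distrib sum_negf)
    then show "g k = exp (real n) * (\<Prod>j<n. exp (- l * (real_of_int (k j))\<^sup>2))"
      by (simp add: g_def exp_add exp_sum)
  qed
  also have "\<dots> = exp (real n) * (\<Prod>j<n. \<Sum>z\<in>{-int (2*m)..int (2*m)}. exp (- l * (real_of_int z)\<^sup>2))"
  proof -
    have "(\<Prod>j<n. \<Sum>z\<in>{-int (2*m)..int (2*m)}. exp (- l * (real_of_int z)\<^sup>2)) =
          (\<Sum>k\<in>box. \<Prod>j<n. exp (- l * (real_of_int (k j))\<^sup>2))"
      unfolding box_def boxz_def
      by (rule prod_sum_PiE[where f="\<lambda>_ z. exp (- l * (real_of_int z)\<^sup>2)"]) auto
    then show ?thesis by (simp add: sum_distrib_left)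
  qed
  also have "\<dots> = exp (real n) * (\<Sum>z\<in>{-int (2*m)..int (2*m)}. exp (- l * (real_of_int z)\<^sup>2)) ^ n"
    by simp
  also have "\<dots> \<le> exp (real n) * (1 + 2 / l) ^ n"
    using gsum_bound[OF l0, of "2*m"]
    by (intro mult_left_mono power_mono) (auto intro: sum_nonneg)
  also have "\<dots> \<le> exp (real n) * (1 + 32 / \<delta>\<^sup>2) ^ n"
  proof -
    have "(real m)\<^sup>2 \<le> (2 * sqrt (real n) / \<delta>)\<^sup>2" using mle m1 by (intro power_mono) auto
    also have "\<dots> = 4 * real n / \<delta>\<^sup>2" by (simp add: power_divide power_mult_distrib)
    finally have "(real m)\<^sup>2 \<le> 4 * real n / \<delta>\<^sup>2" .
    then have "8 * (real m)\<^sup>2 / real n \<le> 32 / \<delta>\<^sup>2" using n1 d0 by (simp add: field_simps)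
    moreover have "2 / l = 8 * (real m)\<^sup>2 / real n" using n1 m1 by (simp add: l_def field_simps)
    ultimately have "1 + 2 / l \<le> 1 + 32 / \<delta>\<^sup>2" by simp
    then show ?thesis using l0 by (intro mult_left_mono power_mono) auto
  qed
  also have "\<dots> = (exp 1 * (1 + 32 / \<delta>\<^sup>2)) ^ n"
    by (simp add: power_mult_distrib flip: exp_of_nat_mult)
  finally show ?thesis using c1 by linarith
qed

end

lemma choose_le_pow_fact:
  assumes "k \<le> N"
  shows "real (N choose k) * fact k \<le> real N ^ k"
proof -
  have "fact k * fact (N - k) * (N choose k) = fact N" by (rule binomial_fact_lemma[OF assms])
  moreover have "fact (N - k) dvd (fact N :: nat)" using assms by (simp add: fact_dvd)
  then have "fact N = fact (N - k) * (fact N div fact (N - k) :: nat)" by simp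
  ultimately have "fact (N - k) * (fact k * (N choose k)) = fact (N - k) * (fact N div fact (N - k) :: nat)"
    by (simp add: algebra_simps)
  then have "fact k * (N choose k) = (fact N div fact (N - k) :: nat)" by simp
  also have "\<dots> \<le> N ^ k" using assms by (rule fact_div_fact_le_pow)
  finally have "fact k * (N choose k) \<le> N ^ k" .
  then have "real (fact k * (N choose k)) \<le> real (N ^ k)" by (simp only: of_nat_le_iff)
  then show ?thesis by (simp add: mult.commute)
qed

lemma pow_fact_le_exp:
  assumes "0 \<le> (x::real)"
  shows "x ^ k / fact k \<le> exp x"
proof -
  have s: "(\<lambda>i. x ^ i / fact i) sums exp x" using exp_converges[of x] by (simp add: divide_inverse mult.commute)
  have "sum (\<lambda>i. x ^ i / fact i) {k} \<le> suminf (\<lambda>i. x ^ i / fact i)"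
    using assms by (intro sum_le_suminf) (use s sums_summable in auto)
  then show ?thesis using sums_unique[OF s] by simp
qed

lemma binom_bound:
  assumes n1: "n \<ge> 1" and Nn: "N \<ge> n" and kn: "k \<le> n"
  shows "real (N choose k) \<le> exp (real n) * (real N / real n) ^ n"
proof -
  have kN: "k \<le> N" using kn Nn by simp
  have rho: "real N / real n \<ge> 1" using n1 Nn by simp
  have "real (N choose k) \<le> real N ^ k / fact k"
    using choose_le_pow_fact[OF kN] by (simp add: field_simps)
  also have "\<dots> = (real N / real n) ^ k * (real n ^ k / fact k)"
    using n1 by (simp add: power_divide field_simps)
  also have "\<dots> \<le> (real N / real n) ^ n * exp (real n)"
    using rho kn by (intro mult_mono power_increasing pow_fact_le_exp) auto
  finally show ?thesis by (simp add: mult.commute)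
qed

lemma prod_event:
  assumes TN: "T \<subseteq> {..<N}"
  shows "measure (gauss_sample n N) {x\<in>space (gauss_sample n N). \<forall>i\<in>T. ip n (x i) u < t}
       = (measure (std_gauss n) {y\<in>space (std_gauss n). ip n y u < t}) ^ card T"
proof -
  interpret PP: product_prob_space "\<lambda>_::nat. std_gauss n" "{..<N}"
    by (rule product_prob_spaceI[OF ps_g])
  define H where "H = {y\<in>space (std_gauss n). ip n y u < t}"
  have Hm: "H \<in> sets (std_gauss n)" unfolding H_def using meas_ip_g by measurable
  have finT: "finite T" using TN finite_subset by blast
  have eq: "{x\<in>space (gauss_sample n N). \<forall>i\<in>T. ip n (x i) u < t} = {x\<in>space (PiM {..<N} (\<lambda>_. std_gauss n)). \<forall>i\<in>T. x i \<in> H}"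
    using TN by (auto simp: gauss_sample_def H_def space_PiM PiE_iff)
  have "emeasure (PiM {..<N} (\<lambda>_. std_gauss n)) {x\<in>space (PiM {..<N} (\<lambda>_. std_gauss n)). \<forall>i\<in>T. x i \<in> H}
      = (\<Prod>i\<in>T. emeasure (std_gauss n) H)"
    using TN finT Hm by (intro PP.emeasure_PiM_Collect) auto
  also have "\<dots> = ennreal ((measure (std_gauss n) H) ^ card T)"
    by (simp add: PP.M.emeasure_eq_measure prod_ennreal ennreal_power)
  finally have m: "measure (PiM {..<N} (\<lambda>_. std_gauss n)) {x\<in>space (PiM {..<N} (\<lambda>_. std_gauss n)). \<forall>i\<in>T. x i \<in> H}
      = (measure (std_gauss n) H) ^ card T"
    by (simp add: PP.P.emeasure_eq_measure)
  show ?thesis unfolding eq using m unfolding gauss_sample_def H_def .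
qed


lemma A1_bound:
  assumes TN: "T \<subseteq> {..<N}" and q0: "0 \<le> q"
    and qle: "q \<le> measure (std_gauss n) {y\<in>space (std_gauss n). t \<le> ip n y u}"
  shows "measure (gauss_sample n N) {x\<in>space (gauss_sample n N). \<forall>i\<in>T. ip n (x i) u < t} \<le> (1 - q) ^ card T"
proof -
  interpret G: prob_space "std_gauss n" by (rule ps_g)
  have m: "{y\<in>space (std_gauss n). t \<le> ip n y u} \<in> sets (std_gauss n)" using meas_ip_g by measurable
  have "space (std_gauss n) - {y\<in>space (std_gauss n). t \<le> ip n y u} = {y\<in>space (std_gauss n). ip n y u < t}"
    by auto
  then have c: "measure (std_gauss n) {y\<in>space (std_gauss n). ip n y u < t} = 1 - measure (std_gauss n) {y\<in>space (std_gauss n). t \<le> ip n y u}"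
    using G.prob_compl[OF m] by simp
  have p1: "measure (std_gauss n) {y\<in>space (std_gauss n). t \<le> ip n y u} \<le> 1" by (rule G.prob_le_1)
  show ?thesis unfolding prod_event[OF TN] c
    using qle p1 by (intro power_mono) auto
qed

lemma A2_bound:
  assumes SN: "S \<subseteq> {..<N}" and cS: "card S = n" and n1: "n \<ge> 1"
    and d0: "0 < \<delta>" and d1: "\<delta> \<le> 1/4" and u: "u \<in> net \<delta> n" and B0: "B \<ge> 0"
  shows "measure (gauss_sample n N) {x\<in>space (gauss_sample n N). B * n \<le> (\<Sum>i\<in>S. ip n (x i) u)} \<le> exp (- B\<^sup>2 * n / 4)"
proof -
  have nu: "1 - \<delta> \<le> nrm n u \<and> nrm n u \<le> 1 + \<delta>" using net_nrm[OF d0 _ n1 u] d1 by simp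
  then have nu0: "nrm n u > 0" using d1 by linarith
  have Sne: "S \<noteq> {}" using cS n1 by auto
  define \<sigma> where "\<sigma> = sqrt (card S) * nrm n u"
  have s0: "\<sigma> > 0" using nu0 Sne SN finite_subset[OF SN] by (simp add: \<sigma>_def card_gt_0_iff)
  have D: "distributed (gauss_sample n N) lborel (\<lambda>x. \<Sum>i\<in>S. ip n (x i) u) (normal_density 0 \<sigma>)"
    unfolding \<sigma>_def by (rule sum_normal[OF SN Sne nu0])
  have "measure (gauss_sample n N) {x\<in>space (gauss_sample n N). B * n \<le> (\<Sum>i\<in>S. ip n (x i) u)}
     \<le> exp (- (B * n)\<^sup>2 / (2 * \<sigma>\<^sup>2))"
    using tail_up[OF ps_s D s0] B0 by simp
  also have "\<dots> \<le> exp (- B\<^sup>2 * n / 4)"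
  proof -
    have nu2: "(nrm n u)\<^sup>2 \<le> 2"
    proof -
      have "nrm n u \<le> 5/4" using nu d1 by linarith
      have "(nrm n u)\<^sup>2 = nrm n u * nrm n u" by (simp add: power2_eq_square)
      also have "\<dots> \<le> 5/4 * (5/4)" using \<open>nrm n u \<le> 5/4\<close> by (intro mult_mono) auto
      finally show ?thesis by simp
    qed
    have s2: "\<sigma>\<^sup>2 = n * (nrm n u)\<^sup>2" using cS by (simp add: \<sigma>_def power_mult_distrib)
    have "B\<^sup>2 * n / 4 \<le> (B * n)\<^sup>2 / (2 * \<sigma>\<^sup>2)"
    proof -
      have pos: "0 < 2 * \<sigma>\<^sup>2" using s0 by simp
      have "B\<^sup>2 * n / 4 * (2 * \<sigma>\<^sup>2) = B\<^sup>2 * n * n * (nrm n u)\<^sup>2 / 2" unfolding s2 by (simp add: field_simps power2_eq_square)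
      also have "\<dots> \<le> B\<^sup>2 * n * n * 2 / 2" using nu2 by (intro divide_right_mono mult_left_mono) auto
      also have "\<dots> = (B * n)\<^sup>2" by (simp add: power2_eq_square)
      finally show ?thesis using pos by (simp add: field_simps)
    qed
    then show ?thesis by simp
  qed
  finally show ?thesis .
qed

lemma main_prob:
  fixes n N :: nat
  assumes n1: "n \<ge> 1" and Nn: "N \<ge> n"
    and d0: "0 < \<delta>" and d1: "\<delta> \<le> 1/4" and B0: "B \<ge> 0" and r0: "r \<ge> 0"
    and tr: "t - B * \<delta> / (1 - \<delta>) \<ge> r"
    and q0: "0 \<le> q"
    and qle: "\<forall>u\<in>net \<delta> n. q \<le> measure (std_gauss n) {y\<in>space (std_gauss n). t \<le> ip n y u}"
    and num: "real (card (net \<delta> n)) * (real (N choose (N - n + 1)) * (1 - q) ^ (N - n + 1))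
              + real (N choose n) * (real (card (net \<delta> n)) * exp (- B\<^sup>2 * n / 4)) \<le> exp (- real n)"
  shows "measure (gauss_sample n N) {x \<in> space (gauss_sample n N).
           subset_n n (ball_n n r) (conv_pts n N x)} \<ge> 1 - exp (- real n)"
proof -
  interpret P: prob_space "gauss_sample n N" by (rule ps_s)
  let ?\<Omega> = "space (gauss_sample n N)"
  define E where "E = {x \<in> ?\<Omega>. subset_n n (ball_n n r) (conv_pts n N x)}"
  have N1: "N \<ge> 1" using n1 Nn by simp
  have Em: "E \<in> sets (gauss_sample n N)" unfolding E_def by (rule event_meas[OF N1 r0])
  define A1 where "A1 u T = {x\<in>?\<Omega>. \<forall>i\<in>T. ip n (x i) u < t}" for u T
  define A2 where "A2 S u = {x\<in>?\<Omega>. B * n \<le> (\<Sum>i\<in>S. ip n (x i) u)}" for S u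
  define Tset where "Tset = {T. T \<subseteq> {..<N} \<and> card T = N - n + 1}"
  define Sset where "Sset = {S. S \<subseteq> {..<N} \<and> card S = n}"
  define Bad1 where "Bad1 = (\<Union>u\<in>net \<delta> n. \<Union>T\<in>Tset. A1 u T)"
  define Bad2 where "Bad2 = (\<Union>S\<in>Sset. \<Union>u\<in>net \<delta> n. A2 S u)"
  have finnet: "finite (net \<delta> n)" using net_fin[OF d0 _ n1] d1 by simp
  have finT: "finite Tset" unfolding Tset_def by (rule finite_subset[of _ "Pow {..<N}"]) auto
  have finS: "finite Sset" unfolding Sset_def by (rule finite_subset[of _ "Pow {..<N}"]) auto
  have A1m: "A1 u T \<in> sets (gauss_sample n N)" if "T \<in> Tset" for u T
  proof -
    have "finite T" using that finite_subset by (auto simp: Tset_def)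
    moreover have "T \<subseteq> {..<N}" using that by (simp add: Tset_def)
    ultimately show ?thesis unfolding A1_def
      by (intro sets.sets_Collect_finite_All borel_measurable_less meas_ip_s borel_measurable_const) auto
  qed
  have A2m: "A2 S u \<in> sets (gauss_sample n N)" if "S \<in> Sset" for S u
  proof -
    have "S \<subseteq> {..<N}" using that by (simp add: Sset_def)
    then show ?thesis unfolding A2_def
      by (intro borel_measurable_le borel_measurable_sum meas_ip_s borel_measurable_const) auto
  qed
  have Bad1m: "Bad1 \<in> sets (gauss_sample n N)" unfolding Bad1_def
    using finnet finT A1m by (intro sets.finite_UN) auto
  have Bad2m: "Bad2 \<in> sets (gauss_sample n N)" unfolding Bad2_def
    using finnet finS A2m by (intro sets.finite_UN) auto
  have cover: "?\<Omega> - E \<subseteq> Bad1 \<union> Bad2"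
  proof
    fix x assume x: "x \<in> ?\<Omega> - E"
    show "x \<in> Bad1 \<union> Bad2"
    proof (rule ccontr)
      assume nb: "x \<notin> Bad1 \<union> Bad2"
      have G1: "\<forall>u\<in>net \<delta> n. \<exists>S. S \<subseteq> {..<N} \<and> card S = n \<and> (\<forall>i\<in>S. ip n (x i) u \<ge> t)"
      proof
        fix u assume u: "u \<in> net \<delta> n"
        define Aset where "Aset = {i\<in>{..<N}. t \<le> ip n (x i) u}"
        have finA: "finite Aset" by (simp add: Aset_def)
        show "\<exists>S. S \<subseteq> {..<N} \<and> card S = n \<and> (\<forall>i\<in>S. ip n (x i) u \<ge> t)"
        proof (cases "n \<le> card Aset")
          case True
          then obtain S where "S \<subseteq> Aset" "card S = n" by (rule obtain_subset_with_card_n)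
          then show ?thesis by (intro exI[of _ S]) (auto simp: Aset_def)
        next
          case False
          define Cset where "Cset = {..<N} - Aset"
          have "card Cset = N - card Aset" unfolding Cset_def
            by (subst card_Diff_subset) (auto simp: Aset_def finA)
          then have "N - n + 1 \<le> card Cset" using False Nn by simp
          then obtain T where TC: "T \<subseteq> Cset" and cT: "card T = N - n + 1"
            by (rule obtain_subset_with_card_n)
          have "T \<in> Tset" using TC cT by (auto simp: Tset_def Cset_def)
          moreover have "x \<in> A1 u T" using x TC by (auto simp: A1_def Cset_def Aset_def not_le)
          ultimately have "x \<in> Bad1" using u unfolding Bad1_def by blast
          then show ?thesis using nb by blast
        qed
      qed
      have G2: "\<forall>S. S \<subseteq> {..<N} \<and> card S = n \<longrightarrow> (\<forall>u\<in>net \<delta> n. (\<Sum>i\<in>S. ip n (x i) u) < B * n)"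
      proof (intro allI impI ballI)
        fix S u assume S: "S \<subseteq> {..<N} \<and> card S = n" and u: "u \<in> net \<delta> n"
        have "x \<notin> A2 S u" using nb S u unfolding Bad2_def Sset_def by blast
        then show "(\<Sum>i\<in>S. ip n (x i) u) < B * n" using x by (auto simp: A2_def)
      qed
      have "\<forall>\<theta>. \<exists>i<N. ip n (x i) \<theta> \<ge> r * nrm n \<theta>"
        by (rule det_all[OF d0 d1 n1 B0 N1 r0 tr G1 G2])
      then have "subset_n n (ball_n n r) (conv_pts n N x)"
        by (rule hcond_imp_subset[OF N1 r0])
      then show False using x by (simp add: E_def)
    qed
  qed
  have "measure (gauss_sample n N) Bad1 \<le> (\<Sum>u\<in>net \<delta> n. measure (gauss_sample n N) (\<Union>T\<in>Tset. A1 u T))"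
    unfolding Bad1_def using finnet finT A1m by (intro P.finite_measure_subadditive_finite) auto
  also have "\<dots> \<le> (\<Sum>u\<in>net \<delta> n. \<Sum>T\<in>Tset. measure (gauss_sample n N) (A1 u T))"
    using finT A1m by (intro sum_mono P.finite_measure_subadditive_finite) auto
  also have "\<dots> \<le> (\<Sum>u\<in>net \<delta> n. \<Sum>T\<in>Tset. (1 - q) ^ (N - n + 1))"
  proof (intro sum_mono)
    fix u T assume u: "u \<in> net \<delta> n" and T: "T \<in> Tset"
    then show "measure (gauss_sample n N) (A1 u T) \<le> (1 - q) ^ (N - n + 1)"
      using A1_bound[OF _ q0, of T N n t u] qle by (auto simp: A1_def Tset_def)
  qed
  also have "\<dots> = real (card (net \<delta> n)) * (real (N choose (N - n + 1)) * (1 - q) ^ (N - n + 1))"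
    by (simp add: Tset_def n_subsets)
  finally have b1: "measure (gauss_sample n N) Bad1 \<le> real (card (net \<delta> n)) * (real (N choose (N - n + 1)) * (1 - q) ^ (N - n + 1))" .
  have "measure (gauss_sample n N) Bad2 \<le> (\<Sum>S\<in>Sset. measure (gauss_sample n N) (\<Union>u\<in>net \<delta> n. A2 S u))"
    unfolding Bad2_def using finnet finS A2m by (intro P.finite_measure_subadditive_finite) auto
  also have "\<dots> \<le> (\<Sum>S\<in>Sset. \<Sum>u\<in>net \<delta> n. measure (gauss_sample n N) (A2 S u))"
    using finnet A2m by (intro sum_mono P.finite_measure_subadditive_finite) auto
  also have "\<dots> \<le> (\<Sum>S\<in>Sset. \<Sum>u\<in>net \<delta> n. exp (- B\<^sup>2 * n / 4))"
  proof (intro sum_mono)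
    fix S u assume S: "S \<in> Sset" and u: "u \<in> net \<delta> n"
    then show "measure (gauss_sample n N) (A2 S u) \<le> exp (- B\<^sup>2 * n / 4)"
      using A2_bound[OF _ _ n1 d0 d1 u B0, of S N] by (auto simp: A2_def Sset_def)
  qed
  also have "\<dots> = real (N choose n) * (real (card (net \<delta> n)) * exp (- B\<^sup>2 * n / 4))"
    by (simp add: Sset_def n_subsets)
  finally have b2: "measure (gauss_sample n N) Bad2 \<le> real (N choose n) * (real (card (net \<delta> n)) * exp (- B\<^sup>2 * n / 4))" .
  have "measure (gauss_sample n N) (?\<Omega> - E) \<le> measure (gauss_sample n N) (Bad1 \<union> Bad2)"
    using cover Bad1m Bad2m by (intro P.finite_measure_mono) auto
  also have "\<dots> \<le> measure (gauss_sample n N) Bad1 + measure (gauss_sample n N) Bad2"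
    using Bad1m Bad2m by (rule measure_Un_le)
  also have "\<dots> \<le> exp (- real n)" using b1 b2 num by linarith
  finally have "measure (gauss_sample n N) (?\<Omega> - E) \<le> exp (- real n)" .
  then show ?thesis using P.prob_compl[OF Em] by (simp add: E_def)
qed

lemma final_num:
  fixes n N :: nat and X K L q B :: real
  assumes n1: "n \<ge> 1" and N2: "N \<ge> 2 * n"
    and X: "X \<le> K ^ n" and X0: "0 \<le> X" and K0: "K > 0"
    and L: "L = ln (real N / real n)"
    and q0: "0 \<le> q" and q1: "q \<le> 1"
    and qr: "q * (real N / real n) \<ge> 2 * (L + ln K + 3)"
    and B2: "B\<^sup>2 = 4 * (L + ln K + 3)"
  shows "X * (real (N choose (N - n + 1)) * (1 - q) ^ (N - n + 1))
        + real (N choose n) * (X * exp (- B\<^sup>2 * n / 4)) \<le> exp (- real n)"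
proof -
  have Nn: "N \<ge> n" using N2 by simp
  define \<rho> where "\<rho> = real N / real n"
  have \<rho>0: "\<rho> > 0" using n1 Nn by (simp add: \<rho>_def)
  have rhon: "\<rho> ^ n = exp (real n * L)" using \<rho>0 by (simp add: L \<rho>_def exp_of_nat_mult)
  have Kn: "K ^ n = exp (real n * ln K)" using K0 by (simp add: exp_of_nat_mult)
  have en: "exp (real n) * \<rho> ^ n * K ^ n = exp (real n * (1 + L + ln K))"
    unfolding rhon Kn by (simp add: exp_add[symmetric] algebra_simps)
  have c1: "real (N choose (N - n + 1)) \<le> exp (real n) * \<rho> ^ n"
  proof -
    have "N choose (N - n + 1) = N choose (n - 1)"
      using Nn n1 by (subst binomial_symmetric) (auto simp: Suc_diff_le)
    then show ?thesis using binom_bound[OF n1 Nn, of "n - 1"] by (simp add: \<rho>_def)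
  qed
  have c2: "real (N choose n) \<le> exp (real n) * \<rho> ^ n"
    using binom_bound[OF n1 Nn, of n] by (simp add: \<rho>_def)
  define m where "m = N - n + 1"
  have mN: "real m \<ge> real N / 2" using N2 by (simp add: m_def)
  have "(1 - q) ^ m \<le> exp (- q) ^ m"
    using q1 by (intro power_mono) (auto simp: exp_ge_add_one_self[of "-q", simplified])
  also have "\<dots> = exp (- q * real m)" by (simp add: exp_of_nat_mult[symmetric] mult.commute)
  also have "\<dots> \<le> exp (- q * (real N / 2))"
  proof -
    have "q * (real N / 2) \<le> q * real m" using mN q0 by (rule mult_left_mono)
    then show ?thesis by simp
  qed
  also have "- q * (real N / 2) = - (q * \<rho>) * real n / 2" using n1 by (simp add: \<rho>_def)
  also have "exp (- (q * \<rho>) * real n / 2) \<le> exp (- real n * (L + ln K + 3))"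
    using qr n1 by (simp add: \<rho>_def mult_left_mono field_simps)
  finally have qm: "(1 - q) ^ m \<le> exp (- real n * (L + ln K + 3))" .
  have t1: "X * (real (N choose m) * (1 - q) ^ m) \<le> exp (- 2 * real n)"
  proof -
    have "X * (real (N choose m) * (1 - q) ^ m) \<le> K ^ n * (exp (real n) * \<rho> ^ n * exp (- real n * (L + ln K + 3)))"
      using X X0 c1 qm q1 by (intro mult_mono) (auto simp: m_def)
    also have "\<dots> = exp (real n) * \<rho> ^ n * K ^ n * exp (- real n * (L + ln K + 3))" by simp
    also have "\<dots> = exp (- 2 * real n)" unfolding en by (simp add: exp_add[symmetric] algebra_simps)
    finally show ?thesis .
  qed
  have t2: "real (N choose n) * (X * exp (- B\<^sup>2 * n / 4)) \<le> exp (- 2 * real n)"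
  proof -
    have e: "exp (- B\<^sup>2 * n / 4) = exp (- real n * (L + ln K + 3))" by (simp add: B2 field_simps)
    have "real (N choose n) * (X * exp (- B\<^sup>2 * n / 4)) \<le> exp (real n) * \<rho> ^ n * (K ^ n * exp (- real n * (L + ln K + 3)))"
      unfolding e using X X0 c2 by (intro mult_mono) auto
    also have "\<dots> = exp (real n) * \<rho> ^ n * K ^ n * exp (- real n * (L + ln K + 3))" by (simp only: mult.assoc)
    also have "\<dots> = exp (- 2 * real n)" unfolding en by (simp add: exp_add[symmetric] algebra_simps)
    finally show ?thesis .
  qed
  have "2 * exp (- 2 * real n) \<le> exp (- real n)"
  proof -
    have "2 \<le> exp (1::real)" using exp_ge_add_one_self[of 1] by simp
    also have "\<dots> \<le> exp (real n)" using n1 by simp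
    finally have "2 * exp (- 2 * real n) \<le> exp (real n) * exp (- 2 * real n)" by simp
    also have "\<dots> = exp (- real n)" by (simp add: exp_add[symmetric])
    finally show ?thesis .
  qed
  then show ?thesis using t1 t2 by (simp add: m_def)
qed

lemma asym_lim: "b > 0 \<Longrightarrow> ((\<lambda>L::real. 108 * sqrt L * (L + c) / exp (b * L)) \<longlongrightarrow> 0) at_top"
  by real_asymp

lemma q_tail:
  assumes n1: "n \<ge> 1" and d0: "0 < \<delta>" and d1: "\<delta> \<le> 1/4" and u: "u \<in> net \<delta> n"
    and s1: "s \<ge> 1"
  shows "exp (- s\<^sup>2 / 2) / (27 * s) \<le> measure (std_gauss n) {y\<in>space (std_gauss n). s * (1 - \<delta>) \<le> ip n y u}"
proof -
  interpret G: prob_space "std_gauss n" by (rule ps_g)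
  have nu: "1 - \<delta> \<le> nrm n u \<and> nrm n u \<le> 1 + \<delta>" using net_nrm[OF d0 _ n1 u] d1 by simp
  define \<sigma> where "\<sigma> = nrm n u"
  have s0: "\<sigma> > 0" using nu d1 by (simp add: \<sigma>_def)
  have D: "distributed (std_gauss n) lborel (\<lambda>y. ip n y u) (normal_density 0 \<sigma>)"
    unfolding \<sigma>_def by (rule lin_normal) (use s0 in \<open>simp add: \<sigma>_def\<close>)
  have c: "\<sigma> \<le> s * \<sigma>" using s1 s0 by simp
  have "exp (- (s * \<sigma>)\<^sup>2 / (2 * \<sigma>\<^sup>2)) * \<sigma> / (27 * (s * \<sigma>)) \<le> measure (std_gauss n) {y\<in>space (std_gauss n). s * \<sigma> \<le> ip n y u}"
    by (rule tail_low[OF ps_g D s0 c])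
  moreover have "exp (- (s * \<sigma>)\<^sup>2 / (2 * \<sigma>\<^sup>2)) * \<sigma> / (27 * (s * \<sigma>)) = exp (- s\<^sup>2 / 2) / (27 * s)"
    using s0 by (simp add: power_mult_distrib field_simps)
  moreover have "measure (std_gauss n) {y\<in>space (std_gauss n). s * \<sigma> \<le> ip n y u}
      \<le> measure (std_gauss n) {y\<in>space (std_gauss n). s * (1 - \<delta>) \<le> ip n y u}"
  proof (rule G.finite_measure_mono)
    have "s * (1 - \<delta>) \<le> s * \<sigma>" using nu s1 by (intro mult_left_mono) (auto simp: \<sigma>_def)
    then show "{y\<in>space (std_gauss n). s * \<sigma> \<le> ip n y u} \<subseteq> {y\<in>space (std_gauss n). s * (1 - \<delta>) \<le> ip n y u}"
      by auto
    show "{y\<in>space (std_gauss n). s * (1 - \<delta>) \<le> ip n y u} \<in> sets (std_gauss n)"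
      using meas_ip_g by measurable
  qed
  ultimately show ?thesis by linarith
qed

theorem theorem3p6:
  fixes \<epsilon> :: real
  assumes "0 < \<epsilon>" and "\<epsilon> < 1"
  shows "\<exists>C > 0. \<forall>n N :: nat. n \<ge> 1 \<longrightarrow> real N \<ge> C * real n \<longrightarrow>
           measure (gauss_sample n N)
             {x \<in> space (gauss_sample n N).
                subset_n n (ball_n n (sqrt (2 * ln (real N / real n) * (1 - \<epsilon>))))
                           (conv_pts n N x)}
           \<ge> 1 - exp (- real n)"
proof -
  have e0: "0 < \<epsilon>" and e1: "\<epsilon> < 1" using assms by auto
  define a where "a = 1 - \<epsilon>"
  define a' where "a' = 1 - \<epsilon> / 2"
  define \<alpha> where "\<alpha> = sqrt (2 * a)"
  define \<alpha>' where "\<alpha>' = sqrt (2 * a')"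
  define \<delta> where "\<delta> = (\<alpha>' - \<alpha>) / (\<alpha>' + 8)"
  define K where "K = exp 1 * (1 + 32 / \<delta>\<^sup>2)"
  define cK where "cK = ln K + 3"
  define \<beta> where "\<beta> = \<epsilon> / 2"
  have a0: "0 < a" using e1 by (simp add: a_def)
  have aa': "a < a'" using e0 by (simp add: a_def a'_def)
  have a'1: "a' \<le> 1" "a' \<ge> 1/2" using e0 e1 by (auto simp: a'_def)
  have al0: "0 \<le> \<alpha>" using a0 by (simp add: \<alpha>_def)
  have alal': "\<alpha> < \<alpha>'" unfolding \<alpha>_def \<alpha>'_def using aa' a0 by simp
  have al'2: "\<alpha>' \<le> 2"
  proof -
    have "\<alpha>' \<le> sqrt 4" unfolding \<alpha>'_def using a'1 by (intro real_sqrt_le_mono) auto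
    then show ?thesis by simp
  qed
  have al'sq: "\<alpha>'\<^sup>2 = 2 * a'" using a'1 by (simp add: \<alpha>'_def)
  have d0: "0 < \<delta>" using alal' al0 by (simp add: \<delta>_def)
  have d1: "\<delta> \<le> 1/4"
  proof -
    have "\<alpha>' - \<alpha> \<le> 2" using al0 al'2 by simp
    moreover have "\<alpha>' + 8 \<ge> 8" using al0 alal' by simp
    ultimately show ?thesis unfolding \<delta>_def by (simp add: field_simps)
  qed
  have dkey: "\<delta> * (\<alpha>' + 8) = \<alpha>' - \<alpha>" using al0 alal' by (simp add: \<delta>_def)
  have K1: "K \<ge> 1"
  proof -
    have "1 \<le> exp (1::real)" by simp
    moreover have "1 \<le> 1 + 32 / \<delta>\<^sup>2" using d0 by simp
    ultimately show ?thesis unfolding K_def using one_le_mult_iff by (metis dual_order.trans mult_mono zero_le_one mult_1_left)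
  qed
  have K0: "K > 0" using K1 by simp
  have "ln K \<ge> 0" using K1 by simp
  then have cK0: "cK > 0" by (simp add: cK_def)
  have b0: "\<beta> > 0" using e0 by (simp add: \<beta>_def)
  have "eventually (\<lambda>L. 108 * sqrt L * (L + cK) / exp (\<beta> * L) < 1) at_top"
    by (rule order_tendstoD(2)[OF asym_lim[OF b0] zero_less_one])
  then obtain L1 where L1: "\<And>L. L \<ge> L1 \<Longrightarrow> 108 * sqrt L * (L + cK) / exp (\<beta> * L) < 1"
    by (auto simp: eventually_at_top_linorder)
  define L0 where "L0 = max (max 1 cK) L1"
  define C where "C = exp L0"
  have C0: "C > 0" by (simp add: C_def)
  show ?thesis
  proof (intro exI[of _ C] conjI C0 allI impI)
    fix n N :: nat
    assume n1: "n \<ge> 1" and NC: "real N \<ge> C * real n"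
    define \<rho> where "\<rho> = real N / real n"
    have rhoC: "\<rho> \<ge> C" using NC n1 by (simp add: \<rho>_def field_simps)
    then have rho0: "\<rho> > 0" using C0 by simp
    define L where "L = ln \<rho>"
    have LL0: "L \<ge> L0"
    proof -
      have "ln C \<le> ln \<rho>" using rhoC C0 by simp
      then show ?thesis by (simp add: L_def C_def)
    qed
    have L_1: "L \<ge> 1" and LcK: "L \<ge> cK" and LL1: "L \<ge> L1" using LL0 by (auto simp: L0_def)
    have rhoL: "\<rho> = exp L" using rho0 by (simp add: L_def)
    have N2: "N \<ge> 2 * n"
    proof -
      have "(2::real) \<le> exp 1" using exp_ge_add_one_self[of 1] by simp
      also have "\<dots> \<le> exp L" using L_1 by simp
      finally have "2 \<le> \<rho>" using rhoL by simp
      then have "2 * real n \<le> real N" using n1 by (simp add: \<rho>_def field_simps)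
      then show ?thesis by linarith
    qed
    have Nn: "N \<ge> n" using N2 by simp
    define s where "s = \<alpha>' * sqrt L"
    have s2: "s\<^sup>2 = 2 * a' * L" using L_1 al'sq by (simp add: s_def power_mult_distrib)
    have s1: "s \<ge> 1"
    proof -
      have "1 * 1 \<le> (2 * a') * L" using a'1 L_1 by (intro mult_mono) auto
      then have "1 \<le> s\<^sup>2" using s2 by simp
      moreover have "s \<ge> 0" using alal' al0 L_1 by (simp add: s_def)
      ultimately show ?thesis using power2_le_imp_le[of 1 s] by simp
    qed
    define t where "t = s * (1 - \<delta>)"
    define B where "B = 2 * sqrt (L + cK)"
    define r where "r = sqrt (2 * ln (real N / real n) * (1 - \<epsilon>))"
    define q where "q = exp (- s\<^sup>2 / 2) / (27 * s)"
    have B0: "B \<ge> 0" using cK0 L_1 by (simp add: B_def)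
    have r0: "r \<ge> 0" unfolding r_def using L_1 e1 by (simp add: L_def \<rho>_def)
    have q0: "q \<ge> 0" using s1 by (simp add: q_def)
    have q1: "q \<le> 1"
    proof -
      have h1: "exp (- s\<^sup>2 / 2) \<le> 1" by simp
      have h2: "1 \<le> 27 * s" using s1 by simp
      have "exp (- s\<^sup>2 / 2) \<le> 27 * s" using h1 h2 by linarith
      then show ?thesis unfolding q_def using h2 by (simp add: divide_le_eq_1)
    qed
    have rr: "r = \<alpha> * sqrt L"
    proof -
      have "2 * ln (real N / real n) * (1 - \<epsilon>) = (2 * a) * L" by (simp add: a_def L_def \<rho>_def)
      then show ?thesis unfolding r_def \<alpha>_def by (simp only: real_sqrt_mult)
    qed
    have tr: "t - B * \<delta> / (1 - \<delta>) \<ge> r"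
    proof -
      have sL: "sqrt L \<ge> 0" using L_1 by simp
      have "B \<le> 2 * (sqrt 2 * sqrt L)"
      proof -
        have "sqrt (L + cK) \<le> sqrt (2 * L)" using LcK by (intro real_sqrt_le_mono) auto
        then show ?thesis by (simp add: B_def real_sqrt_mult)
      qed
      moreover have "sqrt 2 \<le> (3/2::real)"
      proof -
        have "sqrt 2 \<le> sqrt ((3/2::real)\<^sup>2)" by (intro real_sqrt_le_mono) (simp add: power2_eq_square)
        then show ?thesis by simp
      qed
      ultimately have Bl: "B \<le> 3 * sqrt L"
      proof -
        assume h1: "B \<le> 2 * (sqrt 2 * sqrt L)" and h2: "sqrt 2 \<le> (3/2::real)"
        have "sqrt 2 * sqrt L \<le> 3/2 * sqrt L" using h2 sL by (rule mult_right_mono)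
        then show ?thesis using h1 by linarith
      qed
      have "\<delta> / (1 - \<delta>) \<le> 2 * \<delta>" using d0 d1 by (simp add: field_simps)
      then have "B * (\<delta> / (1 - \<delta>)) \<le> 3 * sqrt L * (2 * \<delta>)"
        using Bl B0 d0 d1 L_1 by (intro mult_mono) auto
      then have e1: "B * \<delta> / (1 - \<delta>) \<le> 6 * \<delta> * sqrt L" by (simp add: field_simps)
      have "\<alpha> \<le> \<alpha>' * (1 - \<delta>) - 6 * \<delta>" using dkey d0 by (simp add: algebra_simps)
      then have "\<alpha> * sqrt L \<le> (\<alpha>' * (1 - \<delta>) - 6 * \<delta>) * sqrt L" using sL by (intro mult_right_mono)
      then show ?thesis using e1 rr by (simp add: t_def s_def algebra_simps)
    qed
    have qle: "\<forall>u\<in>net \<delta> n. q \<le> measure (std_gauss n) {y\<in>space (std_gauss n). t \<le> ip n y u}"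
      using q_tail[OF n1 d0 d1 _ s1] by (simp add: q_def t_def)
    have Kc: "real (card (net \<delta> n)) \<le> K ^ n"
      unfolding K_def using net_card[OF d0 _ n1] d1 by simp
    have qr: "q * (real N / real n) \<ge> 2 * (L + ln K + 3)"
    proof -
      have sqL: "sqrt L > 0" using L_1 by simp
      have "q * \<rho> = exp (\<beta> * L) / (27 * s)"
        unfolding q_def rhoL s2 by (simp add: \<beta>_def a'_def field_simps flip: exp_add)
      also have "27 * s \<le> 54 * sqrt L" using al'2 sqL by (simp add: s_def)
      then have "exp (\<beta> * L) / (27 * s) \<ge> exp (\<beta> * L) / (54 * sqrt L)"
        using s1 sqL by (intro divide_left_mono) auto
      moreover have "108 * sqrt L * (L + cK) < exp (\<beta> * L)"
        using L1[OF LL1] by (simp add: field_simps)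
      then have "exp (\<beta> * L) / (54 * sqrt L) \<ge> 2 * (L + cK)"
        using sqL by (simp add: field_simps)
      ultimately show ?thesis using \<open>q * \<rho> = _\<close> by (simp add: \<rho>_def cK_def)
    qed
    have B2: "B\<^sup>2 = 4 * (L + ln K + 3)" using cK0 L_1 by (simp add: B_def power_mult_distrib cK_def)
    have num: "real (card (net \<delta> n)) * (real (N choose (N - n + 1)) * (1 - q) ^ (N - n + 1))
              + real (N choose n) * (real (card (net \<delta> n)) * exp (- B\<^sup>2 * n / 4)) \<le> exp (- real n)"
      by (rule final_num[OF n1 N2 Kc _ K0 _ q0 q1 qr B2]) (simp_all add: L_def \<rho>_def)
    show "measure (gauss_sample n N)
             {x \<in> space (gauss_sample n N).
                subset_n n (ball_n n (sqrt (2 * ln (real N / real n) * (1 - \<epsilon>))))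
                           (conv_pts n N x)}
           \<ge> 1 - exp (- real n)"
      using main_prob[OF n1 Nn d0 d1 B0 r0 tr q0 qle num] by (simp add: r_def)
  qed
qed

end
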